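(* Let $U\in\mathcal{B}(\ell^2(\mathbb{N}))$ be an isometry, $\Omega=\Omega_1\cup\dots\cup\Omega_r$ an $(\mathbf{N},\mathbf{m})$-multilevel Bernoulli sampling scheme with $1\le N_1<\dots<N_r$, $\mathbf{M}=(M_1,\dots,M_r)$ increasing, $\mathbf{s}\in\mathbb{N}^r$, $\Delta=\cup_k\Delta_k$ with $\Delta_k\subseteq\{M_{k-1}+1,\dots,M_k\}$, $|\Delta_k|=s_k$, $s=\sum s_k$, $q_k=m_k/(N_k-N_{k-1})$, $D=\sum_kq_k^{-1}P_{\Omega_k}$, $N=N_r$, $K=\max_k(N_k-N_{k-1})/m_k$, $M=M_r$. Suppose $N$ and $K$ satisfy the weak balancing property with respect to $U$, $M$, $s$. Then for $\xi\in\ell^2(\mathbb{N})$ and $\gamma>0$, $$\mathbb{P}\big(\|(P_\Delta U^*DUP_\Delta-P_\Delta)\xi\|_{\ell^\infty}>\tilde\alpha\|\xi\|_{\ell^\infty}\big)\le\gamma,\qquad\tilde\alpha=\big(2\log_2^{1/2}(4\sqrt sKM)\big)^{-1},$$ provided $1\gtrsim\Lambda\cdot(\log(s\gamma^{-1})+1)\cdot\log(\sqrt sKM)$ and $1\gtrsim\Upsilon\cdot(\log(s\gamma^{-1})+1)\cdot\log(\sqrt sKM)$. Also, $\mathbb{P}\big(\|(P_\Delta U^*DUP_\Delta-P_\Delta)\xi\|_{\ell^\infty}>\frac12\|\xi\|_{\ell^\infty}\big)\le\gamma$ provided $1\gtrsim\Lambda(\log(s\gamma^{-1})+1)$ and $1\gtrsim\Upsilon(\log(s\gamma^{-1})+1)$.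 Moreover, if $q_k=1$ for all $k$, both probabilities are zero.
   Context: $N_0=M_0=0$. Multilevel Bernoulli scheme: $\Omega_k=\{j\in\{N_{k-1}+1,\dots,N_k\}:\delta_j=1\}$, $\delta_j$ independent with $\mathbb{P}(\delta_j=1)=q_k$. $P^a_b$ projects onto $\mathrm{span}\{e_{a+1},\dots,e_b\}$, $P_\Gamma$ onto $\mathrm{span}\{e_j:j\in\Gamma\}$. $\mu(A)=\sup|a_{ij}|^2$; $\mu_{\mathbf{N},\mathbf{M}}(k,l)=\sqrt{\mu(P^{N_{k-1}}_{N_k}UP^{M_{l-1}}_{M_l})\mu(P^{N_{k-1}}_{N_k}U)}$; $\kappa_{\mathbf{N},\mathbf{M}}(k,l)=\max_{\eta\in\Theta'}\|P^{N_{k-1}}_{N_k}UP^{M_{l-1}}_{M_l}\eta\|_{\ell^\infty}\sqrt{\mu(P^{N_{k-1}}_{N_k}U)}$ with $\Theta'=\{\eta:\|\eta\|_\infty\le1,\ |\mathrm{supp}(P^{M_{l-1}}_{M_l}\eta)|=s_l\ (l<r),\ |\mathrm{supp}(P^\perp_{M_{r-1}}\eta)|=s_r\}$; $S_k=\max_{\eta\in\Theta}\|P^{N_{k-1}}_{N_k}U\eta\|^2$, $\Theta=\{\eta:\|\eta\|_\infty\le1,|\mathrm{supp}(P^{M_{l-1}}_{M_l}\eta)|=s_l,\ l=1..r\}$. $\Lambda=\max_k\frac{N_k-N_{k-1}}{m_k}\sum_{l=1}^r\kappa_{\mathbf{N},\mathbf{M}}(k,l)$; $\Upsilon=\sup\max_l\sum_k(\frac{N_k-N_{k-1}}{m_k}-1)\mu_{\mathbf{N},\mathbf{M}}(k,l)\tilde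 s_k$ over $\tilde s_k\ge0$ with $\sum\tilde s_k\le s$, $\tilde s_k\le S_k$. Weak balancing property: $\|P_MU^*P_NUP_M-P_M\|_{\ell^\infty\to\ell^\infty}\le\frac18(\log_2^{1/2}(4\sqrt sKM))^{-1}$. $a\gtrsim b$: $a\ge C_0b$ for a suitable universal constant. Throughout $s\ge3$. *)

theory Defs
  imports "HOL-Probability.Probability"
begin

(* Conventions: the paper's basis e_1, e_2, ... of l^2(N) is indexed here by
   0, 1, 2, ... (e_{j+1} <-> index j).  P^a_b (span of e_{a+1},...,e_b) thus
   corresponds to the index set {a..<b}.  Levels are numbered k = 1..r and
   the sequences Nv, Mv satisfy Nv 0 = Mv 0 = 0.
   Operators on l^2(N) are represented by their (infinite) matrices
   u i j = <U e_j, e_i>. *)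

definition isometry_matrix :: "(nat \<Rightarrow> nat \<Rightarrow> complex) \<Rightarrow> bool" where
  "isometry_matrix u \<longleftrightarrow>
     (\<forall>j. summable (\<lambda>i. (cmod (u i j))\<^sup>2)) \<and>
     (\<forall>i j. (\<Sum>k. cnj (u k i) * u k j) = (if i = j then 1 else 0))"

definition ell2 :: "(nat \<Rightarrow> complex) \<Rightarrow> bool" where
  "ell2 x \<longleftrightarrow> summable (\<lambda>i. (cmod (x i))\<^sup>2)"

definition linfty :: "(nat \<Rightarrow> complex) \<Rightarrow> real" where
  "linfty x = (SUP i. cmod (x i))"

definition lev :: "(nat \<Rightarrow> nat) \<Rightarrow> nat \<Rightarrow> nat set" where
  "lev A k = {A (k - 1)..<A k}"

(* mu(A) = sup |a_ij|^2 ; the supremum of the empty family (zero operator) is 0 *)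
definition mu_block :: "(nat \<Rightarrow> nat \<Rightarrow> complex) \<Rightarrow> (nat \<Rightarrow> nat) \<Rightarrow> (nat \<Rightarrow> nat) \<Rightarrow> nat \<Rightarrow> nat \<Rightarrow> real" where
  "mu_block u Nv Mv k l = Sup (insert 0 {(cmod (u i j))\<^sup>2 | i j. i \<in> lev Nv k \<and> j \<in> lev Mv l})"

definition mu_rows :: "(nat \<Rightarrow> nat \<Rightarrow> complex) \<Rightarrow> (nat \<Rightarrow> nat) \<Rightarrow> nat \<Rightarrow> real" where
  "mu_rows u Nv k = Sup (insert 0 {(cmod (u i j))\<^sup>2 | i j. i \<in> lev Nv k})"

definition muNM :: "(nat \<Rightarrow> nat \<Rightarrow> complex) \<Rightarrow> (nat \<Rightarrow> nat) \<Rightarrow> (nat \<Rightarrow> nat) \<Rightarrow> nat \<Rightarrow> nat \<Rightarrow> real" where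
  "muNM u Nv Mv k l = sqrt (mu_block u Nv Mv k l * mu_rows u Nv k)"

definition Theta' :: "nat \<Rightarrow> (nat \<Rightarrow> nat) \<Rightarrow> (nat \<Rightarrow> nat) \<Rightarrow> (nat \<Rightarrow> complex) set" where
  "Theta' r Mv sv = {\<eta>. (\<forall>j. cmod (\<eta> j) \<le> 1) \<and>
      (\<forall>l\<in>{1..<r}. card {j \<in> lev Mv l. \<eta> j \<noteq> 0} = sv l) \<and>
      finite {j. Mv (r - 1) \<le> j \<and> \<eta> j \<noteq> 0} \<and>
      card {j. Mv (r - 1) \<le> j \<and> \<eta> j \<noteq> 0} = sv r}"

definition Theta :: "nat \<Rightarrow> (nat \<Rightarrow> nat) \<Rightarrow> (nat \<Rightarrow> nat) \<Rightarrow> (nat \<Rightarrow> complex) set" where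
  "Theta r Mv sv = {\<eta>. (\<forall>j. cmod (\<eta> j) \<le> 1) \<and> (\<forall>j. Mv r \<le> j \<longrightarrow> \<eta> j = 0) \<and>
      (\<forall>l\<in>{1..r}. card {j \<in> lev Mv l. \<eta> j \<noteq> 0} = sv l)}"

definition block_linf :: "(nat \<Rightarrow> nat \<Rightarrow> complex) \<Rightarrow> (nat \<Rightarrow> nat) \<Rightarrow> (nat \<Rightarrow> nat) \<Rightarrow> nat \<Rightarrow> nat \<Rightarrow> (nat \<Rightarrow> complex) \<Rightarrow> real" where
  "block_linf u Nv Mv k l \<eta> = linfty (\<lambda>i. if i \<in> lev Nv k then (\<Sum>j\<in>lev Mv l. u i j * \<eta> j) else 0)"

definition kappaNM :: "(nat \<Rightarrow> nat \<Rightarrow> complex) \<Rightarrow> nat \<Rightarrow> (nat \<Rightarrow> nat) \<Rightarrow> (nat \<Rightarrow> nat) \<Rightarrow> (nat \<Rightarrow> nat) \<Rightarrow> nat \<Rightarrow> nat \<Rightarrow> real" where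
  "kappaNM u r Nv Mv sv k l =
     (SUP \<eta>\<in>Theta' r Mv sv. block_linf u Nv Mv k l \<eta>) * sqrt (mu_rows u Nv k)"

definition Sk :: "(nat \<Rightarrow> nat \<Rightarrow> complex) \<Rightarrow> nat \<Rightarrow> (nat \<Rightarrow> nat) \<Rightarrow> (nat \<Rightarrow> nat) \<Rightarrow> (nat \<Rightarrow> nat) \<Rightarrow> nat \<Rightarrow> real" where
  "Sk u r Nv Mv sv k =
     (SUP \<eta>\<in>Theta r Mv sv. \<Sum>i\<in>lev Nv k. (cmod (\<Sum>j<Mv r. u i j * \<eta> j))\<^sup>2)"

definition ratio :: "(nat \<Rightarrow> nat) \<Rightarrow> (nat \<Rightarrow> nat) \<Rightarrow> nat \<Rightarrow> real" where
  "ratio Nv mv k = real (Nv k - Nv (k - 1)) / real (mv k)"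

definition Lambda :: "(nat \<Rightarrow> nat \<Rightarrow> complex) \<Rightarrow> nat \<Rightarrow> (nat \<Rightarrow> nat) \<Rightarrow> (nat \<Rightarrow> nat) \<Rightarrow> (nat \<Rightarrow> nat) \<Rightarrow> (nat \<Rightarrow> nat) \<Rightarrow> real" where
  "Lambda u r Nv Mv mv sv =
     Max ((\<lambda>k. ratio Nv mv k * (\<Sum>l=1..r. kappaNM u r Nv Mv sv k l)) ` {1..r})"

definition Upsilon :: "(nat \<Rightarrow> nat \<Rightarrow> complex) \<Rightarrow> nat \<Rightarrow> (nat \<Rightarrow> nat) \<Rightarrow> (nat \<Rightarrow> nat) \<Rightarrow> (nat \<Rightarrow> nat) \<Rightarrow> (nat \<Rightarrow> nat) \<Rightarrow> real" where
  "Upsilon u r Nv Mv mv sv =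
     Sup {Max ((\<lambda>l. \<Sum>k=1..r. (ratio Nv mv k - 1) * muNM u Nv Mv k l * t k) ` {1..r}) | t.
            (\<forall>k\<in>{1..r}. 0 \<le> t k \<and> t k \<le> Sk u r Nv Mv sv k) \<and>
            (\<Sum>k=1..r. t k) \<le> real (\<Sum>k=1..r. sv k)}"

definition Kmax :: "nat \<Rightarrow> (nat \<Rightarrow> nat) \<Rightarrow> (nat \<Rightarrow> nat) \<Rightarrow> real" where
  "Kmax r Nv mv = Max (ratio Nv mv ` {1..r})"

(* || P_M U^* P_N U P_M - P_M ||_{l^infty -> l^infty} *)
definition balance_opnorm :: "(nat \<Rightarrow> nat \<Rightarrow> complex) \<Rightarrow> nat \<Rightarrow> nat \<Rightarrow> real" where
  "balance_opnorm u N M =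
     Sup {linfty (\<lambda>i. if i < M then
              (\<Sum>j<M. ((\<Sum>k<N. cnj (u k i) * u k j) - (if i = j then 1 else 0)) * x j) else 0)
          | x. \<forall>j. cmod (x j) \<le> 1}"

definition weak_balancing :: "(nat \<Rightarrow> nat \<Rightarrow> complex) \<Rightarrow> nat \<Rightarrow> real \<Rightarrow> nat \<Rightarrow> nat \<Rightarrow> bool" where
  "weak_balancing u N K M s \<longleftrightarrow>
     balance_opnorm u N M \<le> 1 / 8 * inverse (sqrt (log 2 (4 * sqrt (real s) * K * real M)))"

definition qlev :: "(nat \<Rightarrow> nat) \<Rightarrow> (nat \<Rightarrow> nat) \<Rightarrow> nat \<Rightarrow> real" where
  "qlev Nv mv k = real (mv k) / real (Nv k - Nv (k - 1))"

definition qidx :: "nat \<Rightarrow> (nat \<Rightarrow> nat) \<Rightarrow> (nat \<Rightarrow> nat) \<Rightarrow> nat \<Rightarrow> real" where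
  "qidx r Nv mv j = (\<Sum>k=1..r. if j \<in> lev Nv k then qlev Nv mv k else 0)"

(* multilevel Bernoulli scheme: delta_j independent Bernoulli(q_k), j < N_r;
   Omega = {j. delta j} *)
definition bernoulli_scheme :: "nat \<Rightarrow> (nat \<Rightarrow> nat) \<Rightarrow> (nat \<Rightarrow> nat) \<Rightarrow> (nat \<Rightarrow> bool) pmf" where
  "bernoulli_scheme r Nv mv = Pi_pmf {..<Nv r} False (\<lambda>j. bernoulli_pmf (qidx r Nv mv j))"

(* (P_Delta U^* D U P_Delta - P_Delta) xi, with D = sum_k q_k^{-1} P_{Omega_k} *)
definition err_vec :: "(nat \<Rightarrow> nat \<Rightarrow> complex) \<Rightarrow> nat \<Rightarrow> (nat \<Rightarrow> nat) \<Rightarrow> (nat \<Rightarrow> nat) \<Rightarrow> nat set \<Rightarrow> (nat \<Rightarrow> bool) \<Rightarrow> (nat \<Rightarrow> complex) \<Rightarrow> nat \<Rightarrow> complex" where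
  "err_vec u r Nv mv \<Delta> \<delta> \<xi> i =
     (if i \<in> \<Delta> then
        (\<Sum>k\<in>{k. k < Nv r \<and> \<delta> k}. cnj (u k i) *
            (complex_of_real (inverse (qidx r Nv mv k)) * (\<Sum>j\<in>\<Delta>. u k j * \<xi> j))) - \<xi> i
      else 0)"

end

theory Submission
  imports Defs
begin


lemma ln2_ge_half: "ln (2::real) \<ge> 1/2"
proof -
  have "exp (1/2::real) * exp (1/2) = exp 1" by (simp flip: exp_add)
  also have "\<dots> \<le> 3" by (rule exp_le)
  finally have "exp (1/2::real) * exp (1/2) \<le> 4" by simp
  then have "exp (1/2::real) \<le> 2"
    by (metis (no_types, opaque_lifting) exp_gt_zero less_le_not_le linorder_le_less_linear mult_strict_mono' numeral_times_numeral semiring_norm(11) semiring_norm(13) zero_le_numeral)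
  then show ?thesis by (subst ln_ge_iff) auto
qed

lemma num_facts:
  fixes s K M :: real
  assumes s: "s \<ge> 3" and K: "K \<ge> 1" and M: "M \<ge> 3"
  defines "x \<equiv> sqrt s * K * M"
  defines "\<alpha> \<equiv> inverse (2 * sqrt (log 2 (4 * x)))"
  shows "ln x \<ge> 1" "\<alpha> > 0" "\<alpha> \<le> 1/4" "\<alpha>^2 * ln x \<ge> 1/24" "\<alpha> * ln x \<ge> 1/6"
proof -
  have ss: "sqrt s \<ge> 4/3"
  proof -
    have "(4/3::real)^2 \<le> s" using s by (simp add: power2_eq_square)
    then show ?thesis by (rule real_le_rsqrt)
  qed
  have x4: "x \<ge> 4"
  proof -
    have "sqrt s * K \<ge> 4/3 * 1" using ss K s by (intro mult_mono) auto
    then have "sqrt s * K * M \<ge> 4/3 * 3" using M by (intro mult_mono) auto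
    then show ?thesis by (simp add: x_def)
  qed
  show lx: "ln x \<ge> 1"
  proof -
    have "exp 1 \<le> x" using exp_le x4 by linarith
    then show ?thesis using x4 by (subst ln_ge_iff) auto
  qed
  define Lg where "Lg = log 2 (4 * x)"
  have l2: "ln (2::real) > 0" by simp
  have Lg_eq: "Lg = 2 + ln x / ln 2"
  proof -
    have "ln (4 * x) = ln 2 + ln 2 + ln x" using x4 by (simp add: ln_mult flip: ln_mult[of 2 2, simplified])
    then show ?thesis unfolding Lg_def log_def using l2 by (simp add: field_simps)
  qed
  have Lg4: "Lg \<ge> 4"
  proof -
    have "ln x / ln 2 \<ge> 2"
    proof -
      have "ln x \<ge> ln 4" using x4 by simp
      also have "ln (4::real) = 2 * ln 2" using ln_mult[of 2 2] by simp
      finally show ?thesis using l2 by (simp add: field_simps)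
    qed
    then show ?thesis using Lg_eq by simp
  qed
  have Lg_le: "Lg \<le> 4 * ln x"
  proof -
    have "ln x / ln 2 \<le> 2 * ln x"
      using ln2_ge_half lx l2 by (simp add: divide_simps)
    then show ?thesis using Lg_eq lx by simp
  qed
  have sq: "sqrt Lg \<ge> 2" using Lg4 by (simp add: real_le_rsqrt)
  have a_eq: "\<alpha> = inverse (2 * sqrt Lg)" by (simp add: \<alpha>_def Lg_def)
  show a0: "\<alpha> > 0" unfolding a_eq using sq Lg4 by (intro positive_imp_inverse_positive) auto
  show a4: "\<alpha> \<le> 1/4" unfolding a_eq using sq Lg4 by (simp add: inverse_eq_divide divide_simps)
  have a2: "\<alpha>^2 = 1 / (4 * Lg)" unfolding a_eq using Lg4 by (simp add: power_divide power_mult_distrib inverse_eq_divide)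
  show a2l: "\<alpha>^2 * ln x \<ge> 1/24"
  proof -
    have "\<alpha>^2 * ln x = ln x / (4 * Lg)" using a2 by simp
    also have "\<dots> \<ge> ln x / (16 * ln x)" using Lg_le Lg4 lx by (intro divide_left_mono) auto
    also have "ln x / (16 * ln x) = 1/16" using lx by simp
    finally show ?thesis by simp
  qed
  have "\<alpha> * ln x \<ge> 4 * \<alpha> * (\<alpha> * ln x)"
  proof -
    have "4 * \<alpha> * (\<alpha> * ln x) \<le> 1 * (\<alpha> * ln x)" using a4 a0 lx by (intro mult_right_mono) auto
    then show ?thesis by simp
  qed
  moreover have "4 * \<alpha> * (\<alpha> * ln x) = 4 * (\<alpha>^2 * ln x)" by (simp add: power2_eq_square)
  ultimately show "\<alpha> * ln x \<ge> 1/6" using a2l by linarith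
qed


lemma exp_le_quad:
  fixes x :: real assumes "\<bar>x\<bar> \<le> 1" shows "exp x \<le> 1 + x + x^2"
proof (cases "x \<ge> 0")
  case True then show ?thesis using assms exp_bound by auto
next
  case False
  have h: "1 - x \<le> exp (-x)" using exp_ge_add_one_self[of "-x"] by simp
  have pos: "0 < 1 - x" using False by simp
  have "exp x * (1 - x) \<le> exp x * exp (-x)" using h by (intro mult_left_mono) auto
  also have "\<dots> = 1" by (simp add: exp_minus_inverse)
  finally have e: "exp x * (1 - x) \<le> 1" .
  have "(1 - x) * (1 + x + x^2) = 1 - x^3" by (simp add: algebra_simps power2_eq_square power3_eq_cube)
  also have "\<dots> \<ge> 1"
  proof -
    have "0 \<le> x*x" by simp
    then have "x*x*x \<le> 0" using False mult_nonneg_nonpos[of "x*x" x] by simp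
    then show ?thesis by (simp add: power3_eq_cube)
  qed
  finally have "1 \<le> (1 - x) * (1 + x + x^2)" .
  with e have "exp x * (1 - x) \<le> (1 + x + x^2) * (1 - x)" by (simp add: mult.commute)
  then show ?thesis using pos by simp
qed

lemma bern_mgf:
  fixes p c lam :: real
  assumes p: "0 < p" "p \<le> 1" and lam: "lam > 0" and b: "lam * \<bar>c\<bar> / p \<le> 1"
  shows "p * exp (lam * ((1/p - 1) * c)) + (1 - p) * exp (lam * (-c)) \<le> exp (lam^2 * ((1/p - 1) * c^2))"
proof -
  have ip: "1 \<le> 1/p" using p by simp
  have b': "lam * \<bar>c\<bar> \<le> 1"
  proof -
    have "lam * \<bar>c\<bar> \<le> lam * \<bar>c\<bar> / p" using p lam by (simp add: divide_simps mult_left_le) 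
    then show ?thesis using b by linarith
  qed
  have y1: "\<bar>lam * ((1/p - 1) * c)\<bar> \<le> 1"
  proof -
    have "\<bar>lam * ((1/p - 1) * c)\<bar> = lam * (1/p - 1) * \<bar>c\<bar>" using lam ip by (simp add: abs_mult)
    also have "\<dots> \<le> lam * (1/p) * \<bar>c\<bar>" using lam by (intro mult_right_mono mult_left_mono) auto
    finally show ?thesis using b by simp
  qed
  have y2: "\<bar>lam * (-c)\<bar> \<le> 1" using b' lam by (simp add: abs_mult)
  have "p * exp (lam * ((1/p - 1) * c)) + (1 - p) * exp (lam * (-c))
     \<le> p * (1 + lam * ((1/p - 1) * c) + (lam * ((1/p - 1) * c))^2) + (1 - p) * (1 + lam * (-c) + (lam * (-c))^2)"
    using p exp_le_quad[OF y1] exp_le_quad[OF y2] by (intro add_mono mult_left_mono) auto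
  also have "\<dots> = 1 + lam^2 * ((1/p - 1) * c^2)"
    using p by (simp add: field_simps power2_eq_square)
  also have "\<dots> \<le> exp (lam^2 * ((1/p - 1) * c^2))" by (rule exp_ge_add_one_self)
  finally show ?thesis .
qed

lemma finite_set_Pi_bern:
  assumes "finite A"
  shows "finite (set_pmf (Pi_pmf A False (\<lambda>x. bernoulli_pmf (p x))))"
proof -
  have "set_pmf (Pi_pmf A False (\<lambda>x. bernoulli_pmf (p x))) \<subseteq> PiE_dflt A False (set_pmf \<circ> (\<lambda>x. bernoulli_pmf (p x)))"
    by (rule set_Pi_pmf_subset'[OF assms])
  moreover have "finite (PiE_dflt A False (set_pmf \<circ> (\<lambda>x. bernoulli_pmf (p x))))"
    using assms by (intro finite_PiE_dflt) auto
  ultimately show ?thesis by (rule finite_subset)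
qed

lemma conc_tail:
  fixes A :: "nat set" and p c :: "nat \<Rightarrow> real" and lam t :: real
  assumes fin: "finite A" and p: "\<And>x. x \<in> A \<Longrightarrow> 0 < p x \<and> p x \<le> 1" and lam: "lam > 0"
    and b: "\<And>x. x \<in> A \<Longrightarrow> lam * \<bar>c x\<bar> / p x \<le> 1"
  shows "measure_pmf.prob (Pi_pmf A False (\<lambda>x. bernoulli_pmf (p x)))
     {\<delta>. t \<le> (\<Sum>x\<in>A. ((if \<delta> x then 1 / p x else 0) - 1) * c x)}
     \<le> exp (lam^2 * (\<Sum>x\<in>A. (1 / p x - 1) * (c x)^2) - lam * t)"
proof -
  define Q where "Q = Pi_pmf A False (\<lambda>x. bernoulli_pmf (p x))"
  define g where "g = (\<lambda>x b. ((if b then 1 / p x else 0) - 1) * c x)"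
  define S where "S = {\<delta>. t \<le> (\<Sum>x\<in>A. g x (\<delta> x))}"
  have finQ: "finite (set_pmf Q)" unfolding Q_def by (rule finite_set_Pi_bern[OF fin])
  have "measure_pmf.prob Q S = measure_pmf.expectation Q (indicator S)" by simp
  also have "\<dots> \<le> measure_pmf.expectation Q (\<lambda>\<delta>. exp (- lam * t) * (\<Prod>x\<in>A. exp (lam * g x (\<delta> x))))"
  proof (rule integral_mono)
    show "integrable (measure_pmf Q) (indicator S :: _ \<Rightarrow> real)" using finQ by (rule integrable_measure_pmf_finite)
    show "integrable (measure_pmf Q) (\<lambda>\<delta>. exp (- lam * t) * (\<Prod>x\<in>A. exp (lam * g x (\<delta> x))))"
      using finQ by (rule integrable_measure_pmf_finite)
    fix \<delta>
    have eq: "exp (- lam * t) * (\<Prod>x\<in>A. exp (lam * g x (\<delta> x))) = exp (lam * ((\<Sum>x\<in>A. g x (\<delta> x)) - t))"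
      using fin by (simp add: exp_sum[symmetric] sum_distrib_left exp_add[symmetric] algebra_simps)
    show "indicator S \<delta> \<le> exp (- lam * t) * (\<Prod>x\<in>A. exp (lam * g x (\<delta> x)))"
    proof (cases "\<delta> \<in> S")
      case True
      then have "0 \<le> lam * ((\<Sum>x\<in>A. g x (\<delta> x)) - t)" using lam by (simp add: S_def)
      then have "1 \<le> exp (lam * ((\<Sum>x\<in>A. g x (\<delta> x)) - t))" by simp
      then show ?thesis using True eq by simp
    next
      case False then show ?thesis using eq by simp
    qed
  qed
  also have "\<dots> = exp (- lam * t) * measure_pmf.expectation Q (\<lambda>\<delta>. \<Prod>x\<in>A. exp (lam * g x (\<delta> x)))"
    by simp
  also have "measure_pmf.expectation Q (\<lambda>\<delta>. \<Prod>x\<in>A. exp (lam * g x (\<delta> x)))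
      = (\<Prod>x\<in>A. measure_pmf.expectation (bernoulli_pmf (p x)) (\<lambda>v. exp (lam * g x v)))"
    unfolding Q_def
    by (rule expectation_prod_Pi_pmf[OF fin]) (auto intro: integrable_measure_pmf_finite)
  also have "\<dots> \<le> (\<Prod>x\<in>A. exp (lam^2 * ((1 / p x - 1) * (c x)^2)))"
  proof (rule prod_mono)
    fix x assume x: "x \<in> A"
    have px: "0 < p x" "p x \<le> 1" using p[OF x] by auto
    have "measure_pmf.expectation (bernoulli_pmf (p x)) (\<lambda>v. exp (lam * g x v))
       = p x * exp (lam * ((1 / p x - 1) * c x)) + (1 - p x) * exp (lam * (- c x))"
      using px by (simp add: g_def algebra_simps)
    also have "\<dots> \<le> exp (lam^2 * ((1 / p x - 1) * (c x)^2))"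
      by (rule bern_mgf[OF px lam b[OF x]])
    finally show "0 \<le> measure_pmf.expectation (bernoulli_pmf (p x)) (\<lambda>v. exp (lam * g x v)) \<and>
      measure_pmf.expectation (bernoulli_pmf (p x)) (\<lambda>v. exp (lam * g x v)) \<le> exp (lam^2 * ((1 / p x - 1) * (c x)^2))"
      using px by simp
  qed
  also have "(\<Prod>x\<in>A. exp (lam^2 * ((1 / p x - 1) * (c x)^2))) = exp (lam^2 * (\<Sum>x\<in>A. (1 / p x - 1) * (c x)^2))"
    using fin by (simp add: exp_sum sum_distrib_left)
  finally show ?thesis
    by (simp add: Q_def S_def g_def exp_diff exp_minus field_simps)
qed


lemma conc_tail_G:
  fixes A :: "nat set" and p c :: "nat \<Rightarrow> real" and t b V G :: real
  assumes fin: "finite A" and p: "\<And>x. x \<in> A \<Longrightarrow> 0 < p x \<and> p x \<le> 1"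
    and bb: "\<And>x. x \<in> A \<Longrightarrow> \<bar>c x\<bar> / p x \<le> b" and VV: "(\<Sum>x\<in>A. (1 / p x - 1) * (c x)^2) \<le> V"
    and t: "t > 0" and G: "G > 0" and bt: "2 * b * 4 * G \<le> t" and Vt: "4 * 16 * G * V \<le> t^2"
  shows "measure_pmf.prob (Pi_pmf A False (\<lambda>x. bernoulli_pmf (p x)))
     {\<delta>. t / 2 \<le> (\<Sum>x\<in>A. ((if \<delta> x then 1 / p x else 0) - 1) * c x)} \<le> exp (- G)"
proof -
  define lam where "lam = 8 * G / t"
  have lam: "lam > 0" using t G by (simp add: lam_def)
  have bl: "lam * \<bar>c x\<bar> / p x \<le> 1" if x: "x \<in> A" for x
  proof -
    have "lam * \<bar>c x\<bar> / p x = lam * (\<bar>c x\<bar> / p x)" by simp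
    also have "\<dots> \<le> lam * b" using bb[OF x] lam by (intro mult_left_mono) auto
    also have "\<dots> = 8 * G * b / t" by (simp add: lam_def)
    also have "\<dots> \<le> 1" using bt t by (simp add: divide_simps mult_ac)
    finally show ?thesis .
  qed
  have "measure_pmf.prob (Pi_pmf A False (\<lambda>x. bernoulli_pmf (p x)))
     {\<delta>. t / 2 \<le> (\<Sum>x\<in>A. ((if \<delta> x then 1 / p x else 0) - 1) * c x)}
     \<le> exp (lam^2 * (\<Sum>x\<in>A. (1 / p x - 1) * (c x)^2) - lam * (t / 2))"
    by (rule conc_tail[OF fin p lam bl])
  also have "\<dots> \<le> exp (- G)"
  proof -
    have V0: "0 \<le> (\<Sum>x\<in>A. (1 / p x - 1) * (c x)^2)"
      using p by (intro sum_nonneg mult_nonneg_nonneg) auto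
    have "lam^2 * (\<Sum>x\<in>A. (1 / p x - 1) * (c x)^2) \<le> lam^2 * V" using VV by (intro mult_left_mono) auto
    also have "\<dots> = 64 * G^2 * V / t^2" by (simp add: lam_def power2_eq_square)
    also have "\<dots> \<le> G"
    proof -
      have "64 * G^2 * V = G * (4 * 16 * G * V)" by (simp add: power2_eq_square)
      also have "\<dots> \<le> G * t^2" using Vt G by (intro mult_left_mono) auto
      finally show ?thesis using t by (simp add: divide_simps)
    qed
    finally have "lam^2 * (\<Sum>x\<in>A. (1 / p x - 1) * (c x)^2) \<le> G" .
    moreover have "lam * (t / 2) = 4 * G" using t by (simp add: lam_def)
    ultimately have "lam^2 * (\<Sum>x\<in>A. (1 / p x - 1) * (c x)^2) - lam * (t / 2) \<le> - G" using G by linarith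
    then show ?thesis by simp
  qed
  finally show ?thesis .
qed

lemma conc_complex:
  fixes A :: "nat set" and p :: "nat \<Rightarrow> real" and a :: "nat \<Rightarrow> complex" and t b V G :: real
  assumes fin: "finite A" and p: "\<And>x. x \<in> A \<Longrightarrow> 0 < p x \<and> p x \<le> 1"
    and bb: "\<And>x. x \<in> A \<Longrightarrow> cmod (a x) / p x \<le> b" and VV: "(\<Sum>x\<in>A. (1 / p x - 1) * (cmod (a x))^2) \<le> V"
    and t: "t > 0" and G: "G > 0" and bt: "2 * b * 4 * G \<le> t" and Vt: "4 * 16 * G * V \<le> t^2"
  shows "measure_pmf.prob (Pi_pmf A False (\<lambda>x. bernoulli_pmf (p x)))
     {\<delta>. t \<le> cmod (\<Sum>x\<in>A. complex_of_real ((if \<delta> x then 1 / p x else 0) - 1) * a x)} \<le> 4 * exp (- G)"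
proof -
  define Q where "Q = Pi_pmf A False (\<lambda>x. bernoulli_pmf (p x))"
  define e where "e = (\<lambda>\<delta> x. (if \<delta> x then 1 / p x else 0) - (1::real))"
  define T where "T = (\<lambda>c::nat \<Rightarrow> real. {\<delta>. t / 2 \<le> (\<Sum>x\<in>A. ((if \<delta> x then 1 / p x else 0) - 1) * c x)})"
  have pb: "measure_pmf.prob Q (T c) \<le> exp (- G)" if cb: "\<And>x. \<bar>c x\<bar> \<le> cmod (a x)" for c
    unfolding Q_def T_def
  proof (rule conc_tail_G[OF fin p _ _ t G bt Vt])
    fix x assume x: "x \<in> A"
    have "\<bar>c x\<bar> / p x \<le> cmod (a x) / p x" using cb p[OF x] by (intro divide_right_mono) auto
    then show "\<bar>c x\<bar> / p x \<le> b" using bb[OF x] by simp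
  next
    have "(\<Sum>x\<in>A. (1 / p x - 1) * (c x)^2) \<le> (\<Sum>x\<in>A. (1 / p x - 1) * (cmod (a x))^2)"
    proof (rule sum_mono)
      fix x assume x: "x \<in> A"
      have "(c x)^2 \<le> (cmod (a x))^2" using power_mono[OF cb[of x], of 2] by simp
      moreover have "0 \<le> 1 / p x - 1" using p[OF x] by simp
      ultimately show "(1 / p x - 1) * (c x)^2 \<le> (1 / p x - 1) * (cmod (a x))^2" by (rule mult_left_mono)
    qed
    then show "(\<Sum>x\<in>A. (1 / p x - 1) * (c x)^2) \<le> V" using VV by linarith
  qed
  have sub: "{\<delta>. t \<le> cmod (\<Sum>x\<in>A. complex_of_real (e \<delta> x) * a x)}
      \<subseteq> (T (\<lambda>x. Re (a x)) \<union> T (\<lambda>x. - Re (a x))) \<union> (T (\<lambda>x. Im (a x)) \<union> T (\<lambda>x. - Im (a x)))"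
  proof
    fix \<delta> assume "\<delta> \<in> {\<delta>. t \<le> cmod (\<Sum>x\<in>A. complex_of_real (e \<delta> x) * a x)}"
    then have h: "t \<le> cmod (\<Sum>x\<in>A. complex_of_real (e \<delta> x) * a x)" by simp
    define Z where "Z = (\<Sum>x\<in>A. complex_of_real (e \<delta> x) * a x)"
    have re: "Re Z = (\<Sum>x\<in>A. e \<delta> x * Re (a x))" by (simp add: Z_def)
    have im: "Im Z = (\<Sum>x\<in>A. e \<delta> x * Im (a x))" by (simp add: Z_def)
    have "cmod Z \<le> \<bar>Re Z\<bar> + \<bar>Im Z\<bar>" by (rule cmod_le)
    moreover have "t \<le> cmod Z" using h Z_def by simp
    ultimately have "t / 2 \<le> \<bar>Re Z\<bar> \<or> t / 2 \<le> \<bar>Im Z\<bar>" by linarith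
    then have "t / 2 \<le> Re Z \<or> t / 2 \<le> - Re Z \<or> t / 2 \<le> Im Z \<or> t / 2 \<le> - Im Z" by linarith
    moreover have "- Re Z = (\<Sum>x\<in>A. e \<delta> x * (- Re (a x)))" using re by (simp add: sum_negf[symmetric])
    moreover have "- Im Z = (\<Sum>x\<in>A. e \<delta> x * (- Im (a x)))" using im by (simp add: sum_negf[symmetric])
    ultimately show "\<delta> \<in> (T (\<lambda>x. Re (a x)) \<union> T (\<lambda>x. - Re (a x))) \<union> (T (\<lambda>x. Im (a x)) \<union> T (\<lambda>x. - Im (a x)))"
      using re im by (auto simp: T_def e_def)
  qed
  have "measure_pmf.prob Q {\<delta>. t \<le> cmod (\<Sum>x\<in>A. complex_of_real (e \<delta> x) * a x)}
     \<le> measure_pmf.prob Q ((T (\<lambda>x. Re (a x)) \<union> T (\<lambda>x. - Re (a x))) \<union> (T (\<lambda>x. Im (a x)) \<union> T (\<lambda>x. - Im (a x))))"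
    using sub by (intro measure_pmf.finite_measure_mono) auto
  also have "\<dots> \<le> (measure_pmf.prob Q (T (\<lambda>x. Re (a x))) + measure_pmf.prob Q (T (\<lambda>x. - Re (a x))))
        + (measure_pmf.prob Q (T (\<lambda>x. Im (a x))) + measure_pmf.prob Q (T (\<lambda>x. - Im (a x))))"
    by (intro order.trans[OF measure_Un_le] add_mono measure_Un_le) auto
  also have "\<dots> \<le> (exp (-G) + exp (-G)) + (exp (-G) + exp (-G))"
    by (intro add_mono pb) (auto simp: abs_Re_le_cmod abs_Im_le_cmod)
  finally show ?thesis by (simp add: Q_def e_def)
qed


lemma lev_mono:
  fixes A :: "nat \<Rightarrow> nat"
  assumes A0: "A 0 = 0" and inc: "\<forall>k\<in>{2..r}. A (k - 1) < A k" and "a \<le> b" and "b \<le> r"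
  shows "A a \<le> A b"
  using assms(3,4)
proof (induction b)
  case 0 then show ?case by simp
next
  case (Suc b)
  show ?case
  proof (cases "a = Suc b")
    case True then show ?thesis by simp
  next
    case False
    then have "a \<le> b" using Suc by simp
    then have h: "A a \<le> A b" using Suc by simp
    show ?thesis
    proof (cases "b = 0")
      case True
      then have "a = 0" using \<open>a \<le> b\<close> by simp
      then show ?thesis using A0 by simp
    next
      case False
      then have "Suc b \<in> {2..r}" using Suc by auto
      then have "A b < A (Suc b)" using inc by (metis diff_Suc_1)
      then show ?thesis using h by simp
    qed
  qed
qed

lemma lev_disj:
  fixes A :: "nat \<Rightarrow> nat"
  assumes A0: "A 0 = 0" and inc: "\<forall>k\<in>{2..r}. A (k - 1) < A k" and k: "k \<in> {1..r}" and k': "k' \<in> {1..r}" and ne: "k \<noteq> k'"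
  shows "lev A k \<inter> lev A k' = {}"
proof -
  have *: "lev A k \<inter> lev A k' = {}" if "k < k'" "k \<in> {1..r}" "k' \<in> {1..r}" for k k'
  proof -
    have "A k \<le> A (k' - 1)" using lev_mono[OF A0 inc, of k "k' - 1"] that by auto
    then show ?thesis by (auto simp: lev_def)
  qed
  show ?thesis using ne * [OF _ k k'] * [OF _ k' k] by (cases "k < k'") auto
qed

lemma lev_cover:
  fixes A :: "nat \<Rightarrow> nat"
  assumes A0: "A 0 = 0" and i: "i < A r"
  shows "\<exists>k\<in>{1..r}. i \<in> lev A k"
proof -
  define k where "k = (LEAST k. i < A k)"
  have ik: "i < A k" unfolding k_def by (rule LeastI[of _ r]) (rule i)
  have kr: "k \<le> r" unfolding k_def by (rule Least_le) (rule i)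
  have k0: "k \<noteq> 0" using ik A0 by (rule_tac ccontr) simp
  have "\<not> i < A (k - 1)"
  proof
    assume "i < A (k - 1)"
    then have "k \<le> k - 1" unfolding k_def by (rule Least_le)
    then show False using k0 by simp
  qed
  then show ?thesis using ik kr k0 by (intro bexI[of _ k]) (auto simp: lev_def)
qed

lemma lev_union:
  fixes A :: "nat \<Rightarrow> nat"
  assumes A0: "A 0 = 0" and inc: "\<forall>k\<in>{2..r}. A (k - 1) < A k"
  shows "{..<A r} = (\<Union>k\<in>{1..r}. lev A k)"
proof
  show "{..<A r} \<subseteq> (\<Union>k\<in>{1..r}. lev A k)" using lev_cover[of A] A0 by blast
  show "(\<Union>k\<in>{1..r}. lev A k) \<subseteq> {..<A r}"
  proof
    fix i assume "i \<in> (\<Union>k\<in>{1..r}. lev A k)"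
    then obtain k where k: "k \<in> {1..r}" "i \<in> lev A k" by auto
    have "A k \<le> A r" using lev_mono[OF A0 inc, of k r] k by auto
    then show "i \<in> {..<A r}" using k by (auto simp: lev_def)
  qed
qed

lemma sum_levels:
  fixes A :: "nat \<Rightarrow> nat" and f :: "nat \<Rightarrow> 'a::comm_monoid_add"
  assumes A0: "A 0 = 0" and inc: "\<forall>k\<in>{2..r}. A (k - 1) < A k"
  shows "(\<Sum>i<A r. f i) = (\<Sum>k=1..r. \<Sum>i\<in>lev A k. f i)"
proof -
  have "(\<Sum>i<A r. f i) = (\<Sum>i\<in>(\<Union>k\<in>{1..r}. lev A k). f i)" using lev_union[OF A0 inc] by simp
  also have "\<dots> = (\<Sum>k=1..r. \<Sum>i\<in>lev A k. f i)"
  proof (rule sum.UNION_disjoint)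
    show "\<forall>i\<in>{1..r}. finite (lev A i)" by (simp add: lev_def)
    show "\<forall>i\<in>{1..r}. \<forall>j\<in>{1..r}. i \<noteq> j \<longrightarrow> lev A i \<inter> lev A j = {}"
      using lev_disj[OF A0 inc] by blast
  qed simp
  finally show ?thesis .
qed

lemma linfty_ge:
  assumes "bdd_above (range (\<lambda>i. cmod (f i)))" shows "cmod (f i) \<le> linfty f"
  unfolding linfty_def using cSUP_upper[OF UNIV_I assms] by simp

lemma linfty_le:
  assumes "\<And>i. cmod (f i) \<le> B" shows "linfty f \<le> B"
  unfolding linfty_def using assms by (intro cSUP_least) auto

lemma bdd_fin_supp:
  assumes "finite F" "\<And>i. i \<notin> F \<Longrightarrow> f i = 0"
  shows "bdd_above (range (\<lambda>i. cmod (f i)))"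
proof -
  have "cmod (f i) \<le> (\<Sum>j\<in>F. cmod (f j))" for i
  proof (cases "i \<in> F")
    case True then show ?thesis using assms(1) by (intro member_le_sum) auto
  next
    case False then show ?thesis using assms by (simp add: sum_nonneg)
  qed
  then show ?thesis by (rule bdd_aboveI2)
qed

lemma ell2_bdd:
  assumes "ell2 x" shows "bdd_above (range (\<lambda>i. cmod (x i)))"
proof -
  have "summable (\<lambda>i. (cmod (x i))^2)" using assms by (simp add: ell2_def)
  then have "(\<lambda>i. (cmod (x i))^2) \<longlonglongrightarrow> 0" by (rule summable_LIMSEQ_zero)
  then have "convergent (\<lambda>i. (cmod (x i))^2)" by (rule convergentI)
  then have "Bseq (\<lambda>i. (cmod (x i))^2)" by (rule convergent_imp_Bseq)
  then obtain B where B: "\<And>i. norm ((cmod (x i))^2) \<le> B" by (auto simp: Bseq_def)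
  have "cmod (x i) \<le> max 1 B" for i
  proof (cases "cmod (x i) \<le> 1")
    case False
    then have "1 * cmod (x i) \<le> cmod (x i) * cmod (x i)" by (intro mult_right_mono) auto
    then have "cmod (x i) \<le> (cmod (x i))^2" by (simp add: power2_eq_square)
    then show ?thesis using B[of i] by simp
  qed simp
  then show ?thesis by (rule bdd_aboveI2)
qed

lemma iso_summable:
  assumes "isometry_matrix u" shows "summable (\<lambda>k. cnj (u k i) * u k j)"
proof (rule summable_norm_cancel, rule summable_comparison_test)
  have si: "summable (\<lambda>k. (cmod (u k i))^2)" "summable (\<lambda>k. (cmod (u k j))^2)"
    using assms by (auto simp: isometry_matrix_def)
  show "summable (\<lambda>k. ((cmod (u k i))^2 + (cmod (u k j))^2) / 2)"
    using si by (intro summable_divide summable_add)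
  show "\<exists>N. \<forall>n\<ge>N. norm (norm (cnj (u n i) * u n j)) \<le> ((cmod (u n i))^2 + (cmod (u n j))^2) / 2"
  proof (intro exI allI impI)
    fix n
    have "0 \<le> (cmod (u n i) - cmod (u n j))^2" by simp
    then show "norm (norm (cnj (u n i) * u n j)) \<le> ((cmod (u n i))^2 + (cmod (u n j))^2) / 2"
      by (simp add: norm_mult power2_eq_square algebra_simps)
  qed
qed

lemma iso_col_norm:
  assumes "isometry_matrix u" shows "(\<Sum>k. (cmod (u k j))^2) = 1"
proof -
  have "(\<Sum>k. cnj (u k j) * u k j) = 1" using assms by (simp add: isometry_matrix_def)
  moreover have "(\<lambda>k. cnj (u k j) * u k j) = (\<lambda>k. complex_of_real ((cmod (u k j))^2))"
    by (rule ext) (metis complex_norm_square mult.commute)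
  moreover have "summable (\<lambda>k. (cmod (u k j))^2)" using assms by (simp add: isometry_matrix_def)
  ultimately show ?thesis by (metis of_real_eq_1_iff suminf_of_real)
qed

lemma iso_entry_le1:
  assumes "isometry_matrix u" shows "cmod (u i j) \<le> 1"
proof -
  have s: "summable (\<lambda>k. (cmod (u k j))^2)" using assms by (simp add: isometry_matrix_def)
  have "(\<Sum>k\<in>{i}. (cmod (u k j))^2) \<le> (\<Sum>k. (cmod (u k j))^2)"
    using s by (intro sum_le_suminf) auto
  then have "(cmod (u i j))^2 \<le> 1" using iso_col_norm[OF assms] by simp
  then show ?thesis by (simp add: power_le_one_iff abs_square_le_1)
qed

lemma iso_partial:
  fixes F :: "nat set" and \<eta> :: "nat \<Rightarrow> complex"
  assumes iso: "isometry_matrix u" and F: "finite F"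
  shows "(\<Sum>k<N. (cmod (\<Sum>j\<in>F. u k j * \<eta> j))^2) \<le> (\<Sum>j\<in>F. (cmod (\<eta> j))^2)"
proof -
  define g where "g = (\<lambda>k. (cmod (\<Sum>j\<in>F. u k j * \<eta> j))^2)"
  define f where "f = (\<lambda>k. \<Sum>j\<in>F. \<Sum>j'\<in>F. (cnj (\<eta> j) * \<eta> j') * (cnj (u k j) * u k j'))"
  have fg: "f k = complex_of_real (g k)" for k
  proof -
    have "complex_of_real (g k) = cnj (\<Sum>j\<in>F. u k j * \<eta> j) * (\<Sum>j\<in>F. u k j * \<eta> j)"
      unfolding g_def by (metis complex_norm_square mult.commute)
    also have "\<dots> = f k"
      by (simp add: f_def sum_distrib_left sum_distrib_right mult_ac)
    finally show ?thesis by simp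
  qed
  have sf: "summable f" unfolding f_def
    by (intro summable_sum summable_mult iso_summable[OF iso])
  have "suminf f = (\<Sum>j\<in>F. \<Sum>j'\<in>F. (cnj (\<eta> j) * \<eta> j') * (\<Sum>k. cnj (u k j) * u k j'))"
    unfolding f_def
    by (subst suminf_sum, intro summable_sum summable_mult iso_summable[OF iso],
        intro sum.cong refl, subst suminf_sum, intro summable_mult iso_summable[OF iso],
        intro sum.cong refl, rule suminf_mult, rule iso_summable[OF iso])
  also have "\<dots> = (\<Sum>j\<in>F. \<Sum>j'\<in>F. (cnj (\<eta> j) * \<eta> j') * (if j = j' then 1 else 0))"
    using iso by (simp add: isometry_matrix_def)
  also have "\<dots> = (\<Sum>j\<in>F. cnj (\<eta> j) * \<eta> j)"
    using F by (simp add: if_distrib cong: if_cong)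
  also have "\<dots> = complex_of_real (\<Sum>j\<in>F. (cmod (\<eta> j))^2)"
    unfolding of_real_sum by (intro sum.cong refl) (metis complex_norm_square mult.commute)
  finally have sfv: "suminf f = complex_of_real (\<Sum>j\<in>F. (cmod (\<eta> j))^2)" .
  have sg: "summable g"
  proof -
    have "summable (\<lambda>k. Re (f k))" using sf by (rule summable_Re)
    then show ?thesis by (simp add: fg)
  qed
  have "suminf g = Re (suminf f)"
  proof -
    have fg': "f = (\<lambda>k. complex_of_real (g k))" by (rule ext) (rule fg)
    show ?thesis using Re_suminf[OF sf] unfolding fg' by simp
  qed
  then have sgv: "suminf g = (\<Sum>j\<in>F. (cmod (\<eta> j))^2)" using sfv by simp
  have "(\<Sum>k<N. g k) \<le> suminf g" using sg by (intro sum_le_suminf) (auto simp: g_def)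
  then show ?thesis using sgv by (simp add: g_def)
qed


locale mlsetup =
  fixes u :: "nat \<Rightarrow> nat \<Rightarrow> complex" and r :: nat and Nv Mv mv sv :: "nat \<Rightarrow> nat" and \<Delta> :: "nat set"
  assumes iso: "isometry_matrix u" and r1: "r \<ge> 1" and N0: "Nv 0 = 0" and M0: "Mv 0 = 0"
    and N1: "1 \<le> Nv 1"
    and Ninc: "\<forall>k\<in>{2..r}. Nv (k - 1) < Nv k" and Minc: "\<forall>k\<in>{2..r}. Mv (k - 1) < Mv k"
    and mvb: "\<forall>k\<in>{1..r}. 1 \<le> mv k \<and> mv k \<le> Nv k - Nv (k - 1)"
    and Dsub: "\<Delta> \<subseteq> {..<Mv r}" and Dcard: "\<forall>k\<in>{1..r}. card (\<Delta> \<inter> lev Mv k) = sv k"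
    and s3: "(\<Sum>k=1..r. sv k) \<ge> 3"
begin

abbreviation "N \<equiv> Nv r"
abbreviation "M \<equiv> Mv r"
abbreviation "q \<equiv> qidx r Nv mv"

lemma finD: "finite \<Delta>" using Dsub finite_subset by blast

lemma cardD: "card \<Delta> = (\<Sum>k=1..r. sv k)"
proof -
  have "\<Delta> = (\<Union>k\<in>{1..r}. \<Delta> \<inter> lev Mv k)" using Dsub lev_union[OF M0 Minc] by blast
  then have "card \<Delta> = card (\<Union>k\<in>{1..r}. \<Delta> \<inter> lev Mv k)" by simp
  also have "\<dots> = (\<Sum>k=1..r. card (\<Delta> \<inter> lev Mv k))"
  proof (rule card_UN_disjoint)
    show "\<forall>i\<in>{1..r}. finite (\<Delta> \<inter> lev Mv i)" using finD by auto
    show "\<forall>i\<in>{1..r}. \<forall>j\<in>{1..r}. i \<noteq> j \<longrightarrow> \<Delta> \<inter> lev Mv i \<inter> (\<Delta> \<inter> lev Mv j) = {}"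
      using lev_disj[OF M0 Minc] by blast
  qed simp
  also have "\<dots> = (\<Sum>k=1..r. sv k)" using Dcard by simp
  finally show ?thesis .
qed

lemma M3: "real M \<ge> 3"
proof -
  have "card \<Delta> \<le> card {..<M}" using Dsub by (intro card_mono) auto
  then show ?thesis using cardD s3 by simp
qed

lemma diff_pos: "k \<in> {1..r} \<Longrightarrow> 1 \<le> Nv k - Nv (k - 1)"
  using mvb by force

lemma qlev_props: assumes "k \<in> {1..r}"
  shows "0 < qlev Nv mv k" "qlev Nv mv k \<le> 1" "1 / qlev Nv mv k = ratio Nv mv k" "ratio Nv mv k \<ge> 1"
proof -
  have a: "1 \<le> mv k" "mv k \<le> Nv k - Nv (k - 1)" using mvb assms by auto
  then have b: "real (mv k) \<le> real (Nv k - Nv (k - 1))" "1 \<le> real (mv k)" by linarith+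
  show "0 < qlev Nv mv k" using a diff_pos[OF assms] by (simp add: qlev_def)
  have c: "0 < real (Nv k - Nv (k - 1))" using diff_pos[OF assms] by linarith
  have dd: "\<And>a d::real. a \<le> d \<Longrightarrow> 0 < d \<Longrightarrow> a / d \<le> 1" by simp
  show "qlev Nv mv k \<le> 1" unfolding qlev_def by (rule dd[OF b(1) c])
  show "1 / qlev Nv mv k = ratio Nv mv k" by (simp add: qlev_def ratio_def)
  show "ratio Nv mv k \<ge> 1" using b by (simp add: ratio_def divide_simps)
qed

lemma qidx_lev: assumes k: "k \<in> {1..r}" and j: "j \<in> lev Nv k"
  shows "q j = qlev Nv mv k"
proof -
  have "q j = (\<Sum>k'=1..r. if k' = k then qlev Nv mv k' else 0)"
    unfolding qidx_def
  proof (intro sum.cong refl)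
    fix k' assume k': "k' \<in> {1..r}"
    show "(if j \<in> lev Nv k' then qlev Nv mv k' else 0) = (if k' = k then qlev Nv mv k' else 0)"
      using lev_disj[OF N0 Ninc k k'] j by auto
  qed
  also have "\<dots> = qlev Nv mv k" using k by simp
  finally show ?thesis .
qed

lemma level_of_N: assumes "j < N" obtains k where "k \<in> {1..r}" "j \<in> lev Nv k"
  using lev_cover[OF N0 assms] by blast

lemma q_props: assumes "j < N" shows "0 < q j" "q j \<le> 1"
proof -
  obtain k where k: "k \<in> {1..r}" "j \<in> lev Nv k" by (rule level_of_N[OF assms])
  show "0 < q j" "q j \<le> 1" using qidx_lev[OF k] qlev_props[OF k(1)] by auto
qed

lemma K1: "Kmax r Nv mv \<ge> 1"
proof -
  have "1 \<in> {1..r}" using r1 by simp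
  then have "ratio Nv mv 1 \<le> Kmax r Nv mv" unfolding Kmax_def by (intro Max_ge) auto
  then show ?thesis using qlev_props(4)[of 1] r1 by simp
qed

lemma err_decomp:
  assumes i: "i \<in> \<Delta>"
  shows "err_vec u r Nv mv \<Delta> \<delta> \<xi> i =
    (\<Sum>k<N. complex_of_real ((if \<delta> k then 1 / q k else 0) - 1) * (cnj (u k i) * (\<Sum>j\<in>\<Delta>. u k j * \<xi> j)))
    + ((\<Sum>k<N. cnj (u k i) * (\<Sum>j\<in>\<Delta>. u k j * \<xi> j)) - \<xi> i)"
proof -
  have e: "{k. k < N \<and> \<delta> k} = {k \<in> {..<N}. \<delta> k}" by auto
  have "(\<Sum>k\<in>{k. k < N \<and> \<delta> k}. cnj (u k i) * (complex_of_real (inverse (q k)) * (\<Sum>j\<in>\<Delta>. u k j * \<xi> j)))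
     = (\<Sum>k<N. if \<delta> k then cnj (u k i) * (complex_of_real (inverse (q k)) * (\<Sum>j\<in>\<Delta>. u k j * \<xi> j)) else 0)"
    unfolding e by (rule sum.inter_filter) simp
  also have "\<dots> = (\<Sum>k<N. complex_of_real ((if \<delta> k then 1 / q k else 0) - 1) * (cnj (u k i) * (\<Sum>j\<in>\<Delta>. u k j * \<xi> j))
       + cnj (u k i) * (\<Sum>j\<in>\<Delta>. u k j * \<xi> j))"
    by (intro sum.cong refl) (auto simp: algebra_simps divide_inverse)
  finally show ?thesis using i by (simp add: err_vec_def sum.distrib)
qed

lemma D_expand:
  assumes i: "i \<in> \<Delta>"
  shows "(\<Sum>k<N. cnj (u k i) * (\<Sum>j\<in>\<Delta>. u k j * \<xi> j)) - \<xi> i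
     = (\<Sum>j\<in>\<Delta>. ((\<Sum>k<N. cnj (u k i) * u k j) - (if i = j then 1 else 0)) * \<xi> j)"
proof -
  have "(\<Sum>k<N. cnj (u k i) * (\<Sum>j\<in>\<Delta>. u k j * \<xi> j)) = (\<Sum>j\<in>\<Delta>. (\<Sum>k<N. cnj (u k i) * u k j) * \<xi> j)"
    by (simp add: sum_distrib_left sum_distrib_right mult_ac sum.swap[of _ "{..<N}"])
  moreover have "(\<Sum>j\<in>\<Delta>. (if i = j then 1 else 0) * \<xi> j) = \<xi> i"
  proof -
    have "(\<Sum>j\<in>\<Delta>. (if i = j then 1 else 0) * \<xi> j) = (\<Sum>j\<in>\<Delta>. if i = j then \<xi> j else 0)"
      by (intro sum.cong) auto
    then show ?thesis using i finD by simp
  qed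
  ultimately show ?thesis by (simp add: algebra_simps sum_subtractf)
qed

lemma D_bound:
  assumes i: "i \<in> \<Delta>" and xb: "\<And>j. cmod (\<xi> j) \<le> L" and L: "L > 0"
  shows "cmod ((\<Sum>k<N. cnj (u k i) * (\<Sum>j\<in>\<Delta>. u k j * \<xi> j)) - \<xi> i) \<le> balance_opnorm u N M * L"
proof -
  define coef where "coef = (\<lambda>i j. (\<Sum>k<N. cnj (u k i) * u k j) - (if i = j then 1 else 0))"
  define x where "x = (\<lambda>j. if j \<in> \<Delta> then \<xi> j / complex_of_real L else 0)"
  define vec where "vec = (\<lambda>x :: nat \<Rightarrow> complex. (\<lambda>i. if i < M then (\<Sum>j<M. coef i j * x j) else 0))"
  define B where "B = (\<Sum>i<M. \<Sum>j<M. cmod (coef i j))"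
  have x1: "cmod (x j) \<le> 1" for j using xb[of j] L by (simp add: x_def norm_divide)
  have iM: "i < M" using i Dsub by auto
  have "(\<Sum>j<M. coef i j * x j) = (\<Sum>j\<in>\<Delta>. coef i j * x j)"
    using Dsub by (intro sum.mono_neutral_right) (auto simp: x_def)
  also have "\<dots> = (\<Sum>j\<in>\<Delta>. coef i j * \<xi> j) / complex_of_real L"
    by (simp add: x_def sum_divide_distrib)
  finally have vi: "vec x i = (\<Sum>j\<in>\<Delta>. coef i j * \<xi> j) / complex_of_real L" using iM by (simp add: vec_def)
  have vb: "cmod (vec y i') \<le> B" if y: "\<And>j. cmod (y j) \<le> 1" for y i'
  proof (cases "i' < M")
    case True
    have "cmod (vec y i') \<le> (\<Sum>j<M. cmod (coef i' j * y j))" using True by (simp add: vec_def norm_sum)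
    also have "\<dots> \<le> (\<Sum>j<M. cmod (coef i' j))"
      by (intro sum_mono) (simp add: norm_mult mult_left_le y)
    also have "\<dots> \<le> B" unfolding B_def using True by (intro member_le_sum[of i' "{..<M}" "\<lambda>i. \<Sum>j<M. cmod (coef i j)"]) (auto intro: sum_nonneg)
    finally show ?thesis .
  next
    case False then show ?thesis by (simp add: vec_def B_def sum_nonneg)
  qed
  have bo: "balance_opnorm u N M = Sup {linfty (vec y) | y. \<forall>j. cmod (y j) \<le> 1}"
    unfolding balance_opnorm_def vec_def coef_def by (rule refl)
  have "cmod (vec x i) \<le> linfty (vec x)"
    by (rule linfty_ge) (rule bdd_aboveI2, rule vb, rule x1)
  also have "\<dots> \<le> balance_opnorm u N M" unfolding bo
  proof (rule cSup_upper)
    show "linfty (vec x) \<in> {linfty (vec y) | y. \<forall>j. cmod (y j) \<le> 1}" using x1 by blast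
    show "bdd_above {linfty (vec y) | y. \<forall>j. cmod (y j) \<le> 1}"
      by (rule bdd_aboveI[of _ B]) (auto intro!: linfty_le vb)
  qed
  finally have "cmod (\<Sum>j\<in>\<Delta>. coef i j * \<xi> j) / L \<le> balance_opnorm u N M"
    using vi L by (simp add: norm_divide)
  then show ?thesis using D_expand[OF i] L by (simp add: coef_def divide_simps mult.commute)
qed

end


lemma fix_support:
  fixes \<Phi> :: "(nat \<Rightarrow> complex) \<Rightarrow> real" and \<eta> :: "nat \<Rightarrow> complex" and S :: "nat set"
  assumes b: "\<And>j. cmod (\<eta> j) \<le> 1" and out: "\<And>j. j \<notin> S \<Longrightarrow> \<eta> j = 0"
    and H: "\<And>e. 2 * \<Phi> \<eta> \<le> \<Phi> (\<lambda>j. \<eta> j + e j) + \<Phi> (\<lambda>j. \<eta> j - e j)"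
  obtains \<eta>' where "\<forall>j. cmod (\<eta>' j) \<le> 1" "\<forall>j. \<eta>' j \<noteq> 0 \<longleftrightarrow> j \<in> S" "\<Phi> \<eta> \<le> \<Phi> \<eta>'"
proof -
  define e where "e = (\<lambda>j. if j \<in> S \<and> \<eta> j = 0 then (1::complex) else 0)"
  have p1: "\<forall>j. cmod (\<eta> j + e j) \<le> 1" "\<forall>j. \<eta> j + e j \<noteq> 0 \<longleftrightarrow> j \<in> S"
    using b out by (auto simp: e_def)
  have p2: "\<forall>j. cmod (\<eta> j - e j) \<le> 1" "\<forall>j. \<eta> j - e j \<noteq> 0 \<longleftrightarrow> j \<in> S"
    using b out by (auto simp: e_def)
  have "\<Phi> \<eta> \<le> \<Phi> (\<lambda>j. \<eta> j + e j) \<or> \<Phi> \<eta> \<le> \<Phi> (\<lambda>j. \<eta> j - e j)" using H[of e] by linarith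
  then show ?thesis
  proof
    assume "\<Phi> \<eta> \<le> \<Phi> (\<lambda>j. \<eta> j + e j)"
    then show ?thesis using p1 by (intro that[of "\<lambda>j. \<eta> j + e j"]) auto
  next
    assume "\<Phi> \<eta> \<le> \<Phi> (\<lambda>j. \<eta> j - e j)"
    then show ?thesis using p2 by (intro that[of "\<lambda>j. \<eta> j - e j"]) auto
  qed
qed

lemma H_lin:
  fixes c :: "nat \<Rightarrow> complex"
  shows "2 * cmod (\<Sum>j\<in>F. c j * \<eta> j) \<le> cmod (\<Sum>j\<in>F. c j * (\<eta> j + e j)) + cmod (\<Sum>j\<in>F. c j * (\<eta> j - e j))"
proof -
  define X where "X = (\<Sum>j\<in>F. c j * \<eta> j)"
  define Y where "Y = (\<Sum>j\<in>F. c j * e j)"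
  have 1: "(\<Sum>j\<in>F. c j * (\<eta> j + e j)) = X + Y" by (simp add: X_def Y_def algebra_simps sum.distrib)
  have 2: "(\<Sum>j\<in>F. c j * (\<eta> j - e j)) = X - Y" by (simp add: X_def Y_def algebra_simps sum_subtractf)
  have "2 * cmod X = cmod ((X + Y) + (X - Y))" by (simp add: norm_mult)
  also have "\<dots> \<le> cmod (X + Y) + cmod (X - Y)" by (rule norm_triangle_ineq)
  finally show ?thesis unfolding 1 2 X_def .
qed

lemma par_ineq: fixes X Y :: complex shows "2 * (cmod X)^2 \<le> (cmod (X + Y))^2 + (cmod (X - Y))^2"
proof -
  have "(cmod (X + Y))^2 + (cmod (X - Y))^2 = 2 * (cmod X)^2 + 2 * (cmod Y)^2"
    unfolding cmod_power2 by (simp add: power2_eq_square algebra_simps)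
  then show ?thesis by simp
qed

lemma H_quad:
  fixes c :: "nat \<Rightarrow> nat \<Rightarrow> complex"
  shows "2 * (\<Sum>i\<in>I. (cmod (\<Sum>j\<in>F. c i j * \<eta> j))^2) \<le> (\<Sum>i\<in>I. (cmod (\<Sum>j\<in>F. c i j * (\<eta> j + e j)))^2)
      + (\<Sum>i\<in>I. (cmod (\<Sum>j\<in>F. c i j * (\<eta> j - e j)))^2)"
proof -
  have "(\<Sum>i\<in>I. 2 * (cmod (\<Sum>j\<in>F. c i j * \<eta> j))^2) \<le>
      (\<Sum>i\<in>I. (cmod (\<Sum>j\<in>F. c i j * (\<eta> j + e j)))^2 + (cmod (\<Sum>j\<in>F. c i j * (\<eta> j - e j)))^2)"
  proof (rule sum_mono)
    fix i
    have 1: "(\<Sum>j\<in>F. c i j * (\<eta> j + e j)) = (\<Sum>j\<in>F. c i j * \<eta> j) + (\<Sum>j\<in>F. c i j * e j)"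
      by (simp add: algebra_simps sum.distrib)
    have 2: "(\<Sum>j\<in>F. c i j * (\<eta> j - e j)) = (\<Sum>j\<in>F. c i j * \<eta> j) - (\<Sum>j\<in>F. c i j * e j)"
      by (simp add: algebra_simps sum_subtractf)
    show "2 * (cmod (\<Sum>j\<in>F. c i j * \<eta> j))^2 \<le> (cmod (\<Sum>j\<in>F. c i j * (\<eta> j + e j)))^2 + (cmod (\<Sum>j\<in>F. c i j * (\<eta> j - e j)))^2"
      unfolding 1 2 by (rule par_ineq)
  qed
  then show ?thesis by (simp add: sum.distrib sum_distrib_left)
qed

context mlsetup begin

lemma in_Theta':
  assumes "\<forall>j. cmod (\<eta> j) \<le> 1" "\<forall>j. \<eta> j \<noteq> 0 \<longleftrightarrow> j \<in> \<Delta>"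
  shows "\<eta> \<in> Theta' r Mv sv"
proof -
  have a: "{j \<in> lev Mv l. \<eta> j \<noteq> 0} = \<Delta> \<inter> lev Mv l" for l using assms(2) by auto
  have b: "{j. Mv (r - 1) \<le> j \<and> \<eta> j \<noteq> 0} = \<Delta> \<inter> lev Mv r" using assms(2) Dsub by (auto simp: lev_def)
  show ?thesis unfolding Theta'_def using assms(1) a b Dcard finD r1 by auto
qed

lemma in_Theta:
  assumes "\<forall>j. cmod (\<eta> j) \<le> 1" "\<forall>j. \<eta> j \<noteq> 0 \<longleftrightarrow> j \<in> \<Delta>"
  shows "\<eta> \<in> Theta r Mv sv"
proof -
  have a: "{j \<in> lev Mv l. \<eta> j \<noteq> 0} = \<Delta> \<inter> lev Mv l" for l using assms(2) by auto
  have c: "\<forall>j. M \<le> j \<longrightarrow> \<eta> j = 0" using assms(2) Dsub by force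
  show ?thesis unfolding Theta_def using assms(1) a c Dcard by auto
qed

lemma bl_le:
  assumes "\<forall>j. cmod (\<eta> j) \<le> 1"
  shows "block_linf u Nv Mv kk l \<eta> \<le> (\<Sum>i\<in>lev Nv kk. \<Sum>j\<in>lev Mv l. cmod (u i j))"
  unfolding block_linf_def
proof (rule linfty_le)
  fix i
  show "cmod (if i \<in> lev Nv kk then \<Sum>j\<in>lev Mv l. u i j * \<eta> j else 0) \<le> (\<Sum>i\<in>lev Nv kk. \<Sum>j\<in>lev Mv l. cmod (u i j))"
  proof (cases "i \<in> lev Nv kk")
    case True
    have "cmod (\<Sum>j\<in>lev Mv l. u i j * \<eta> j) \<le> (\<Sum>j\<in>lev Mv l. cmod (u i j * \<eta> j))" by (rule norm_sum)
    also have "\<dots> \<le> (\<Sum>j\<in>lev Mv l. cmod (u i j))"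
      using assms by (intro sum_mono) (simp add: norm_mult mult_left_le)
    also have "\<dots> \<le> (\<Sum>i\<in>lev Nv kk. \<Sum>j\<in>lev Mv l. cmod (u i j))"
      using True by (intro member_le_sum[of i "lev Nv kk" "\<lambda>i. \<Sum>j\<in>lev Mv l. cmod (u i j)"]) (auto intro: sum_nonneg simp: lev_def)
    finally show ?thesis using True by simp
  next
    case False then show ?thesis by (simp add: sum_nonneg)
  qed
qed

lemma bl_ge:
  assumes "k \<in> lev Nv kk"
  shows "cmod (\<Sum>j\<in>lev Mv l. u k j * \<eta> j) \<le> block_linf u Nv Mv kk l \<eta>"
proof -
  have "cmod (if k \<in> lev Nv kk then \<Sum>j\<in>lev Mv l. u k j * \<eta> j else 0) \<le> block_linf u Nv Mv kk l \<eta>"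
    unfolding block_linf_def by (rule linfty_ge, rule bdd_fin_supp[of "lev Nv kk"]) (auto simp: lev_def)
  then show ?thesis using assms by simp
qed

lemma bl_SUP:
  assumes "k \<in> lev Nv kk" "\<eta> \<in> Theta' r Mv sv"
  shows "cmod (\<Sum>j\<in>lev Mv l. u k j * \<eta> j) \<le> (SUP \<zeta>\<in>Theta' r Mv sv. block_linf u Nv Mv kk l \<zeta>)"
proof -
  have "cmod (\<Sum>j\<in>lev Mv l. u k j * \<eta> j) \<le> block_linf u Nv Mv kk l \<eta>" by (rule bl_ge[OF assms(1)])
  also have "\<dots> \<le> (SUP \<zeta>\<in>Theta' r Mv sv. block_linf u Nv Mv kk l \<zeta>)"
  proof (rule cSUP_upper[OF assms(2)])
    show "bdd_above ((block_linf u Nv Mv kk l) ` Theta' r Mv sv)"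
      by (rule bdd_aboveI2[of _ _ "\<Sum>i\<in>lev Nv kk. \<Sum>j\<in>lev Mv l. cmod (u i j)"], rule bl_le) (auto simp: Theta'_def)
  qed
  finally show ?thesis .
qed

lemma u_sq_le1: "(cmod (u i j))^2 \<le> 1"
  using iso_entry_le1[OF iso, of i j] by (simp add: abs_square_le_1)

lemma mr_ge: assumes "k \<in> lev Nv kk" shows "(cmod (u k i))^2 \<le> mu_rows u Nv kk"
  unfolding mu_rows_def
  by (rule cSup_upper) (use assms u_sq_le1 in \<open>auto intro!: bdd_aboveI[of _ 1]\<close>)

lemma mb_ge: assumes "k \<in> lev Nv kk" "i \<in> lev Mv l" shows "(cmod (u k i))^2 \<le> mu_block u Nv Mv kk l"
  unfolding mu_block_def
  by (rule cSup_upper) (use assms u_sq_le1 in \<open>auto intro!: bdd_aboveI[of _ 1]\<close>)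

lemma mb_nonneg: "0 \<le> mu_block u Nv Mv kk l"
  unfolding mu_block_def
  by (rule cSup_upper2[of 0]) (use u_sq_le1 in \<open>auto intro!: bdd_aboveI[of _ 1]\<close>)

lemma mb_le_mr: "mu_block u Nv Mv kk l \<le> mu_rows u Nv kk"
  unfolding mu_block_def mu_rows_def
  by (rule cSup_subset_mono) (use u_sq_le1 in \<open>auto intro!: bdd_aboveI[of _ 1]\<close>)

lemma mb_le_muNM: "mu_block u Nv Mv kk l \<le> muNM u Nv Mv kk l"
proof -
  have "mu_block u Nv Mv kk l = sqrt (mu_block u Nv Mv kk l * mu_block u Nv Mv kk l)"
    using mb_nonneg by (simp add: real_sqrt_mult_self)
  also have "\<dots> \<le> sqrt (mu_block u Nv Mv kk l * mu_rows u Nv kk)"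
    using mb_nonneg mb_le_mr by (intro real_sqrt_le_mono mult_left_mono) auto
  finally show ?thesis unfolding muNM_def .
qed

lemma muNM_nonneg: "0 \<le> muNM u Nv Mv kk l"
  using mb_nonneg[of kk l] mb_le_mr[of kk l] by (simp add: muNM_def)

end


context mlsetup begin

lemma w_levels:
  fixes \<xi> :: "nat \<Rightarrow> complex" and L :: real
  assumes L: "L > 0"
  defines "\<eta> \<equiv> (\<lambda>j. if j \<in> \<Delta> then \<xi> j / complex_of_real L else 0)"
  shows "(\<Sum>j\<in>\<Delta>. u k j * \<xi> j) = complex_of_real L * (\<Sum>j<M. u k j * \<eta> j)"
    and "(\<Sum>j<M. u k j * \<eta> j) = (\<Sum>l=1..r. \<Sum>j\<in>lev Mv l. u k j * \<eta> j)"
proof -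
  have "(\<Sum>j<M. u k j * \<eta> j) = (\<Sum>j\<in>\<Delta>. u k j * \<eta> j)"
    using Dsub by (intro sum.mono_neutral_right) (auto simp: \<eta>_def)
  also have "\<dots> = (\<Sum>j\<in>\<Delta>. u k j * \<xi> j) / complex_of_real L"
    by (simp add: \<eta>_def sum_divide_distrib)
  finally show "(\<Sum>j\<in>\<Delta>. u k j * \<xi> j) = complex_of_real L * (\<Sum>j<M. u k j * \<eta> j)" using L by simp
  show "(\<Sum>j<M. u k j * \<eta> j) = (\<Sum>l=1..r. \<Sum>j\<in>lev Mv l. u k j * \<eta> j)"
    by (rule sum_levels[OF M0 Minc])
qed

lemma eta_props:
  fixes \<xi> :: "nat \<Rightarrow> complex" and L :: real
  assumes L: "L > 0" and xb: "\<And>j. cmod (\<xi> j) \<le> L"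
  defines "\<eta> \<equiv> (\<lambda>j. if j \<in> \<Delta> then \<xi> j / complex_of_real L else 0)"
  shows "\<And>j. cmod (\<eta> j) \<le> 1" "\<And>j. j \<notin> \<Delta> \<Longrightarrow> \<eta> j = 0"
  using xb L by (auto simp: \<eta>_def norm_divide)

lemma a_bound:
  assumes i: "i \<in> \<Delta>" and k: "k < N" and L: "L > 0" and xb: "\<And>j. cmod (\<xi> j) \<le> L"
  shows "cmod (cnj (u k i) * (\<Sum>j\<in>\<Delta>. u k j * \<xi> j)) / q k \<le> Lambda u r Nv Mv mv sv * L"
proof -
  define \<eta> where "\<eta> = (\<lambda>j. if j \<in> \<Delta> then \<xi> j / complex_of_real L else 0)"
  obtain kk where kk: "kk \<in> {1..r}" "k \<in> lev Nv kk" by (rule level_of_N[OF k])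
  define SU where "SU = (\<lambda>l. (SUP \<zeta>\<in>Theta' r Mv sv. block_linf u Nv Mv kk l \<zeta>))"
  have eb: "\<And>j. cmod (\<eta> j) \<le> 1" "\<And>j. j \<notin> \<Delta> \<Longrightarrow> \<eta> j = 0"
    using xb L by (auto simp: \<eta>_def norm_divide)
  have lb: "cmod (\<Sum>j\<in>lev Mv l. u k j * \<eta> j) \<le> SU l" for l
  proof -
    obtain \<eta>' where e': "\<forall>j. cmod (\<eta>' j) \<le> 1" "\<forall>j. \<eta>' j \<noteq> 0 \<longleftrightarrow> j \<in> \<Delta>"
      "cmod (\<Sum>j\<in>lev Mv l. u k j * \<eta> j) \<le> cmod (\<Sum>j\<in>lev Mv l. u k j * \<eta>' j)"
      by (rule fix_support[of \<eta> \<Delta> "\<lambda>\<zeta>. cmod (\<Sum>j\<in>lev Mv l. u k j * \<zeta> j)", OF eb(1) eb(2) H_lin])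
    have "cmod (\<Sum>j\<in>lev Mv l. u k j * \<eta>' j) \<le> SU l"
      unfolding SU_def by (rule bl_SUP[OF kk(2) in_Theta'[OF e'(1,2)]])
    then show ?thesis using e'(3) by simp
  qed
  have wb: "cmod (\<Sum>j\<in>\<Delta>. u k j * \<xi> j) \<le> L * (\<Sum>l=1..r. SU l)"
  proof -
    have "cmod (\<Sum>j\<in>\<Delta>. u k j * \<xi> j) = L * cmod (\<Sum>l=1..r. \<Sum>j\<in>lev Mv l. u k j * \<eta> j)"
      using w_levels[where \<xi>=\<xi> and k=k and L=L, OF L] L unfolding \<eta>_def by (simp add: norm_mult)
    also have "\<dots> \<le> L * (\<Sum>l=1..r. cmod (\<Sum>j\<in>lev Mv l. u k j * \<eta> j))"
      using L by (intro mult_left_mono norm_sum) auto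
    also have "\<dots> \<le> L * (\<Sum>l=1..r. SU l)"
      using L lb by (intro mult_left_mono sum_mono) auto
    finally show ?thesis .
  qed
  have mr0: "0 \<le> mu_rows u Nv kk" using mb_nonneg[of kk 1] mb_le_mr[of kk 1] by linarith
  have ub: "cmod (u k i) \<le> sqrt (mu_rows u Nv kk)"
  proof -
    have "0 \<le> mu_rows u Nv kk" using mb_nonneg[of kk 1] mb_le_mr[of kk 1] by linarith
    then show ?thesis using mr_ge[OF kk(2), of i]
      by (metis abs_norm_cancel real_sqrt_abs real_sqrt_le_mono)
  qed
  have "cmod (cnj (u k i) * (\<Sum>j\<in>\<Delta>. u k j * \<xi> j)) \<le> sqrt (mu_rows u Nv kk) * (L * (\<Sum>l=1..r. SU l))"
    unfolding norm_mult complex_mod_cnj by (rule mult_mono[OF ub wb]) (use mr0 in auto)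
  also have "\<dots> = L * (\<Sum>l=1..r. kappaNM u r Nv Mv sv kk l)"
    by (simp add: kappaNM_def SU_def sum_distrib_left sum_distrib_right mult_ac)
  finally have ab: "cmod (cnj (u k i) * (\<Sum>j\<in>\<Delta>. u k j * \<xi> j)) \<le> L * (\<Sum>l=1..r. kappaNM u r Nv Mv sv kk l)" .
  have qk: "1 / q k = ratio Nv mv kk" using qidx_lev[OF kk] qlev_props(3)[OF kk(1)] by simp
  have r1': "ratio Nv mv kk \<ge> 1" using qlev_props(4)[OF kk(1)] .
  have "cmod (cnj (u k i) * (\<Sum>j\<in>\<Delta>. u k j * \<xi> j)) / q k = ratio Nv mv kk * cmod (cnj (u k i) * (\<Sum>j\<in>\<Delta>. u k j * \<xi> j))"
    unfolding qk[symmetric] by simp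
  also have "\<dots> \<le> ratio Nv mv kk * (L * (\<Sum>l=1..r. kappaNM u r Nv Mv sv kk l))"
    using r1' ab by (intro mult_left_mono) auto
  also have "\<dots> = L * (ratio Nv mv kk * (\<Sum>l=1..r. kappaNM u r Nv Mv sv kk l))" by simp
  also have "\<dots> \<le> L * Lambda u r Nv Mv mv sv"
    unfolding Lambda_def using L kk(1) by (intro mult_left_mono Max_ge) auto
  finally show ?thesis by (simp add: mult.commute)
qed

end


context mlsetup begin

lemma Sk_ge:
  assumes "\<eta> \<in> Theta r Mv sv"
  shows "(\<Sum>i\<in>lev Nv kk. (cmod (\<Sum>j<M. u i j * \<eta> j))^2) \<le> Sk u r Nv Mv sv kk"
  unfolding Sk_def
proof (rule cSUP_upper[OF assms])
  show "bdd_above ((\<lambda>\<eta>. \<Sum>i\<in>lev Nv kk. (cmod (\<Sum>j<M. u i j * \<eta> j))^2) ` Theta r Mv sv)"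
  proof (rule bdd_aboveI2)
    fix \<zeta> assume z: "\<zeta> \<in> Theta r Mv sv"
    then have zb: "cmod (\<zeta> j) \<le> 1" for j by (auto simp: Theta_def)
    show "(\<Sum>i\<in>lev Nv kk. (cmod (\<Sum>j<M. u i j * \<zeta> j))^2) \<le> (\<Sum>i\<in>lev Nv kk. (\<Sum>j<M. cmod (u i j))^2)"
    proof (rule sum_mono)
      fix i
      have "cmod (\<Sum>j<M. u i j * \<zeta> j) \<le> (\<Sum>j<M. cmod (u i j * \<zeta> j))" by (rule norm_sum)
      also have "\<dots> \<le> (\<Sum>j<M. cmod (u i j))" using zb by (intro sum_mono) (simp add: norm_mult mult_left_le)
      finally show "(cmod (\<Sum>j<M. u i j * \<zeta> j))^2 \<le> (\<Sum>j<M. cmod (u i j))^2"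
        by (intro power_mono) auto
    qed
  qed
qed

lemma Ups_ge:
  assumes t: "\<forall>k\<in>{1..r}. 0 \<le> t k \<and> t k \<le> Sk u r Nv Mv sv k" and ts: "(\<Sum>k=1..r. t k) \<le> real (\<Sum>k=1..r. sv k)"
    and l: "l \<in> {1..r}"
  shows "(\<Sum>k=1..r. (ratio Nv mv k - 1) * muNM u Nv Mv k l * t k) \<le> Upsilon u r Nv Mv mv sv"
proof -
  define F where "F = (\<lambda>t l. \<Sum>k=1..r. (ratio Nv mv k - 1) * muNM u Nv Mv k l * t k)"
  define Bd where "Bd = (\<Sum>l'=1..r. \<bar>F (Sk u r Nv Mv sv) l'\<bar>)"
  have cf: "0 \<le> (ratio Nv mv k - 1) * muNM u Nv Mv k l'" if "k \<in> {1..r}" for k l'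
    using qlev_props(4)[OF that] muNM_nonneg by simp
  have Fm: "F t' l' \<le> Bd" if t': "\<forall>k\<in>{1..r}. 0 \<le> t' k \<and> t' k \<le> Sk u r Nv Mv sv k" and l': "l' \<in> {1..r}" for t' l'
  proof -
    have "F t' l' \<le> F (Sk u r Nv Mv sv) l'" unfolding F_def
      using t' cf by (intro sum_mono mult_left_mono) auto
    also have "\<dots> \<le> \<bar>F (Sk u r Nv Mv sv) l'\<bar>" by simp
    also have "\<dots> \<le> Bd" unfolding Bd_def using l' by (intro member_le_sum) auto
    finally show ?thesis .
  qed
  have ne: "{1..r} \<noteq> {}" using r1 by auto
  have "F t l \<le> Max ((\<lambda>l. F t l) ` {1..r})" using l by (intro Max_ge) auto
  also have "\<dots> \<le> Upsilon u r Nv Mv mv sv"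
  proof -
    define Sset where "Sset = {Max ((\<lambda>l. F t' l) ` {1..r}) | t'. (\<forall>k\<in>{1..r}. 0 \<le> t' k \<and> t' k \<le> Sk u r Nv Mv sv k)
        \<and> (\<Sum>k=1..r. t' k) \<le> real (\<Sum>k=1..r. sv k)}"
    have U: "Upsilon u r Nv Mv mv sv = Sup Sset" by (simp add: Upsilon_def F_def Sset_def)
    have "Max ((\<lambda>l. F t l) ` {1..r}) \<le> Sup Sset"
    proof (rule cSup_upper)
      show "Max ((\<lambda>l. F t l) ` {1..r}) \<in> Sset" unfolding Sset_def using t ts by blast
      show "bdd_above Sset" unfolding Sset_def
        by (rule bdd_aboveI[of _ Bd]) (use ne Fm in \<open>auto simp: Max_le_iff\<close>)
    qed
    then show ?thesis using U by simp
  qed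
  finally show ?thesis by (simp add: F_def)
qed

lemma var_bound:
  assumes i: "i \<in> \<Delta>" and L: "L > 0" and xb: "\<And>j. cmod (\<xi> j) \<le> L"
  shows "(\<Sum>k<N. (1 / q k - 1) * (cmod (cnj (u k i) * (\<Sum>j\<in>\<Delta>. u k j * \<xi> j)))^2) \<le> Upsilon u r Nv Mv mv sv * L^2"
proof -
  define \<eta> where "\<eta> = (\<lambda>j. if j \<in> \<Delta> then \<xi> j / complex_of_real L else 0)"
  define W where "W = (\<lambda>k. \<Sum>j<M. u k j * \<eta> j)"
  define T where "T = (\<lambda>kk. \<Sum>k\<in>lev Nv kk. (cmod (W k))^2)"
  have eb: "\<And>j. cmod (\<eta> j) \<le> 1" "\<And>j. j \<notin> \<Delta> \<Longrightarrow> \<eta> j = 0"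
    using xb L by (auto simp: \<eta>_def norm_divide)
  obtain l0 where l0: "l0 \<in> {1..r}" "i \<in> lev Mv l0" using lev_cover[of Mv i r, OF M0] i Dsub by (meson atLeastAtMost_iff lessThan_iff subsetD)
  have wk: "(\<Sum>j\<in>\<Delta>. u k j * \<xi> j) = complex_of_real L * W k" for k
    unfolding W_def \<eta>_def by (rule w_levels(1)[OF L])
  have tm: "(1 / q k - 1) * (cmod (cnj (u k i) * (\<Sum>j\<in>\<Delta>. u k j * \<xi> j)))^2
      \<le> L^2 * ((ratio Nv mv kk - 1) * muNM u Nv Mv kk l0 * (cmod (W k))^2)"
    if kk: "kk \<in> {1..r}" "k \<in> lev Nv kk" for kk k
  proof -
    have qk: "1 / q k = ratio Nv mv kk" using qidx_lev[OF kk] qlev_props(3)[OF kk(1)] by simp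
    have r0: "0 \<le> ratio Nv mv kk - 1" using qlev_props(4)[OF kk(1)] by simp
    have "(cmod (cnj (u k i) * (\<Sum>j\<in>\<Delta>. u k j * \<xi> j)))^2 = (cmod (u k i))^2 * (L^2 * (cmod (W k))^2)"
      using L by (simp add: wk norm_mult power_mult_distrib)
    also have "\<dots> \<le> muNM u Nv Mv kk l0 * (L^2 * (cmod (W k))^2)"
      using mb_ge[OF kk(2) l0(2)] mb_le_muNM[of kk l0] by (intro mult_right_mono) auto
    finally have h: "(cmod (cnj (u k i) * (\<Sum>j\<in>\<Delta>. u k j * \<xi> j)))^2 \<le> muNM u Nv Mv kk l0 * (L^2 * (cmod (W k))^2)" .
    have "(1 / q k - 1) * (cmod (cnj (u k i) * (\<Sum>j\<in>\<Delta>. u k j * \<xi> j)))^2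
        \<le> (ratio Nv mv kk - 1) * (muNM u Nv Mv kk l0 * (L^2 * (cmod (W k))^2))"
      unfolding qk using r0 h by (rule mult_left_mono[rotated])
    then show ?thesis by (simp add: mult_ac)
  qed
  have "(\<Sum>k<N. (1 / q k - 1) * (cmod (cnj (u k i) * (\<Sum>j\<in>\<Delta>. u k j * \<xi> j)))^2)
     = (\<Sum>kk=1..r. \<Sum>k\<in>lev Nv kk. (1 / q k - 1) * (cmod (cnj (u k i) * (\<Sum>j\<in>\<Delta>. u k j * \<xi> j)))^2)"
    by (rule sum_levels[OF N0 Ninc])
  also have "\<dots> \<le> (\<Sum>kk=1..r. \<Sum>k\<in>lev Nv kk. L^2 * ((ratio Nv mv kk - 1) * muNM u Nv Mv kk l0 * (cmod (W k))^2))"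
    using tm by (intro sum_mono) auto
  also have "\<dots> = L^2 * (\<Sum>kk=1..r. (ratio Nv mv kk - 1) * muNM u Nv Mv kk l0 * T kk)"
    by (simp add: T_def sum_distrib_left)
  also have "\<dots> \<le> L^2 * Upsilon u r Nv Mv mv sv"
  proof (intro mult_left_mono Ups_ge[OF _ _ l0(1)])
    show "\<forall>k\<in>{1..r}. 0 \<le> T k \<and> T k \<le> Sk u r Nv Mv sv k"
    proof
      fix kk assume kk: "kk \<in> {1..r}"
      obtain \<eta>' where e': "\<forall>j. cmod (\<eta>' j) \<le> 1" "\<forall>j. \<eta>' j \<noteq> 0 \<longleftrightarrow> j \<in> \<Delta>"
        "(\<Sum>k\<in>lev Nv kk. (cmod (\<Sum>j<M. u k j * \<eta> j))^2) \<le> (\<Sum>k\<in>lev Nv kk. (cmod (\<Sum>j<M. u k j * \<eta>' j))^2)"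
        by (rule fix_support[of \<eta> \<Delta> "\<lambda>\<zeta>. \<Sum>k\<in>lev Nv kk. (cmod (\<Sum>j<M. u k j * \<zeta> j))^2", OF eb(1) eb(2) H_quad])
      have "T kk \<le> Sk u r Nv Mv sv kk"
        using e'(3) Sk_ge[OF in_Theta[OF e'(1,2)], of kk] by (simp add: T_def W_def)
      moreover have "0 \<le> T kk" by (simp add: T_def sum_nonneg)
      ultimately show "0 \<le> T kk \<and> T kk \<le> Sk u r Nv Mv sv kk" by simp
    qed
    have "(\<Sum>kk=1..r. T kk) = (\<Sum>k<N. (cmod (W k))^2)"
      unfolding T_def by (rule sum_levels[OF N0 Ninc, symmetric])
    also have "\<dots> \<le> (\<Sum>j<M. (cmod (\<eta> j))^2)"
      unfolding W_def by (rule iso_partial[OF iso]) simp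
    also have "\<dots> \<le> (\<Sum>j<M. if j \<in> \<Delta> then 1 else 0)"
      using eb by (intro sum_mono) (auto simp: abs_square_le_1)
    also have "\<dots> = real (card \<Delta>)"
      using Dsub by (simp add: sum.If_cases Int_absorb1)
    also have "\<dots> = real (\<Sum>k=1..r. sv k)" using cardD by simp
    finally show "(\<Sum>kk=1..r. T kk) \<le> real (\<Sum>k=1..r. sv k)" .
  qed simp
  finally show ?thesis by (simp add: mult.commute)
qed

end


context mlsetup begin

definition Zi :: "(nat \<Rightarrow> complex) \<Rightarrow> nat \<Rightarrow> (nat \<Rightarrow> bool) \<Rightarrow> complex" where
  "Zi \<xi> i \<delta> = (\<Sum>k<N. complex_of_real ((if \<delta> k then 1 / q k else 0) - 1) * (cnj (u k i) * (\<Sum>j\<in>\<Delta>. u k j * \<xi> j)))"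

lemma event_sub:
  assumes xi: "ell2 \<xi>" and L: "linfty \<xi> > 0" and bo: "balance_opnorm u N M \<le> \<beta>"
    and t: "t \<le> c * linfty \<xi> - \<beta> * linfty \<xi>" and c: "0 \<le> c"
  shows "{\<delta>. linfty (err_vec u r Nv mv \<Delta> \<delta> \<xi>) > c * linfty \<xi>} \<subseteq> (\<Union>i\<in>\<Delta>. {\<delta>. t \<le> cmod (Zi \<xi> i \<delta>)})"
proof
  fix \<delta> assume "\<delta> \<in> {\<delta>. linfty (err_vec u r Nv mv \<Delta> \<delta> \<xi>) > c * linfty \<xi>}"
  then have big: "linfty (err_vec u r Nv mv \<Delta> \<delta> \<xi>) > c * linfty \<xi>" by simp
  define L where "L = linfty \<xi>"
  have xb: "cmod (\<xi> j) \<le> L" for j unfolding L_def by (rule linfty_ge[OF ell2_bdd[OF xi]])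
  have "\<exists>i\<in>\<Delta>. cmod (err_vec u r Nv mv \<Delta> \<delta> \<xi> i) > c * L"
  proof (rule ccontr)
    assume "\<not> ?thesis"
    then have "cmod (err_vec u r Nv mv \<Delta> \<delta> \<xi> i) \<le> c * L" for i
      using c L by (cases "i \<in> \<Delta>") (auto simp: err_vec_def L_def not_less)
    then have "linfty (err_vec u r Nv mv \<Delta> \<delta> \<xi>) \<le> c * L" by (rule linfty_le)
    then show False using big L_def by simp
  qed
  then obtain i where i: "i \<in> \<Delta>" "cmod (err_vec u r Nv mv \<Delta> \<delta> \<xi> i) > c * L" by blast
  define Dv where "Dv = (\<Sum>k<N. cnj (u k i) * (\<Sum>j\<in>\<Delta>. u k j * \<xi> j)) - \<xi> i"
  have e: "err_vec u r Nv mv \<Delta> \<delta> \<xi> i = Zi \<xi> i \<delta> + Dv"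
    unfolding Zi_def Dv_def by (rule err_decomp[OF i(1)])
  have "cmod Dv \<le> balance_opnorm u N M * L" unfolding Dv_def
    using D_bound[OF i(1) xb] L L_def by simp
  also have "\<dots> \<le> \<beta> * L" using bo L L_def by (intro mult_right_mono) auto
  finally have db: "cmod Dv \<le> \<beta> * L" .
  have "cmod (err_vec u r Nv mv \<Delta> \<delta> \<xi> i) \<le> cmod (Zi \<xi> i \<delta>) + cmod Dv" unfolding e by (rule norm_triangle_ineq)
  moreover have "t \<le> c * L - \<beta> * L" using t by (simp add: L_def)
  ultimately have "t \<le> cmod (Zi \<xi> i \<delta>)" using i(2) db by linarith
  then show "\<delta> \<in> (\<Union>i\<in>\<Delta>. {\<delta>. t \<le> cmod (Zi \<xi> i \<delta>)})" using i(1) by blast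
qed

lemma prob_union_le:
  fixes P :: "(nat \<Rightarrow> bool) pmf"
  assumes "E \<subseteq> (\<Union>i\<in>\<Delta>. S i)" "\<And>i. i \<in> \<Delta> \<Longrightarrow> measure_pmf.prob P (S i) \<le> b"
  shows "measure_pmf.prob P E \<le> real (card \<Delta>) * b"
proof -
  have "measure_pmf.prob P E \<le> measure_pmf.prob P (\<Union>i\<in>\<Delta>. S i)"
    using assms(1) by (intro measure_pmf.finite_measure_mono) auto
  also have "\<dots> \<le> (\<Sum>i\<in>\<Delta>. measure_pmf.prob P (S i))"
    by (rule measure_pmf.finite_measure_subadditive_finite[OF finD]) auto
  also have "\<dots> \<le> (\<Sum>i\<in>\<Delta>. b)" using assms(2) by (intro sum_mono) auto
  finally show ?thesis by simp
qed

lemma scheme_eq: "bernoulli_scheme r Nv mv = Pi_pmf {..<N} False (\<lambda>j. bernoulli_pmf (q j))"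
  by (simp add: bernoulli_scheme_def)

lemma main_bound:
  fixes \<xi> :: "nat \<Rightarrow> complex" and \<gamma> c t \<beta> :: real
  assumes xi: "ell2 \<xi>" and L: "linfty \<xi> > 0" and bo: "balance_opnorm u N M \<le> \<beta>"
    and t: "t \<le> c * linfty \<xi> - \<beta> * linfty \<xi>" and c: "0 \<le> c" and t0: "t > 0"
    and g: "0 < \<gamma>" "\<gamma> < 1"
    and bc: "8 * (Lambda u r Nv Mv mv sv * linfty \<xi>) * ln (4 * real (\<Sum>k=1..r. sv k) / \<gamma>) \<le> t"
    and vc: "64 * ln (4 * real (\<Sum>k=1..r. sv k) / \<gamma>) * (Upsilon u r Nv Mv mv sv * (linfty \<xi>)^2) \<le> t^2"
  shows "measure_pmf.prob (bernoulli_scheme r Nv mv) {\<delta>. linfty (err_vec u r Nv mv \<Delta> \<delta> \<xi>) > c * linfty \<xi>} \<le> \<gamma>"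
proof -
  define L where "L = linfty \<xi>"
  define s where "s = real (\<Sum>k=1..r. sv k)"
  define G where "G = ln (4 * s / \<gamma>)"
  have s3': "s \<ge> 3" using s3 unfolding s_def by linarith
  have G0: "G > 0" unfolding G_def using s3' g by (subst ln_gt_zero_iff) (auto simp: field_simps)
  have xb: "cmod (\<xi> j) \<le> L" for j unfolding L_def by (rule linfty_ge[OF ell2_bdd[OF xi]])
  have each: "measure_pmf.prob (bernoulli_scheme r Nv mv) {\<delta>. t \<le> cmod (Zi \<xi> i \<delta>)} \<le> 4 * exp (- G)"
    if i: "i \<in> \<Delta>" for i
    unfolding scheme_eq Zi_def
  proof (rule conc_complex[where b = "Lambda u r Nv Mv mv sv * L" and V = "Upsilon u r Nv Mv mv sv * L^2"])
    show "finite {..<N}" by simp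
    show "\<And>x. x \<in> {..<N} \<Longrightarrow> 0 < q x \<and> q x \<le> 1" using q_props by auto
    show "\<And>x. x \<in> {..<N} \<Longrightarrow> cmod (cnj (u x i) * (\<Sum>j\<in>\<Delta>. u x j * \<xi> j)) / q x \<le> Lambda u r Nv Mv mv sv * L"
      using a_bound[OF i _ _ xb] L L_def by auto
    show "(\<Sum>x<N. (1 / q x - 1) * (cmod (cnj (u x i) * (\<Sum>j\<in>\<Delta>. u x j * \<xi> j)))^2) \<le> Upsilon u r Nv Mv mv sv * L^2"
      using var_bound[OF i _ xb] L L_def by auto
    show "t > 0" by (rule t0)
    show "G > 0" by (rule G0)
    show "2 * (Lambda u r Nv Mv mv sv * L) * 4 * G \<le> t" using bc by (simp add: L_def G_def s_def mult_ac)
    show "4 * 16 * G * (Upsilon u r Nv Mv mv sv * L^2) \<le> t^2" using vc by (simp add: L_def G_def s_def mult_ac)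
  qed
  have "measure_pmf.prob (bernoulli_scheme r Nv mv) {\<delta>. linfty (err_vec u r Nv mv \<Delta> \<delta> \<xi>) > c * linfty \<xi>}
      \<le> real (card \<Delta>) * (4 * exp (- G))"
    by (rule prob_union_le[OF event_sub[OF xi L bo t c]]) (rule each)
  also have "\<dots> = \<gamma>"
  proof -
    have "exp (- G) = \<gamma> / (4 * s)" unfolding G_def using g s3' by (simp add: exp_minus exp_ln)
    then show ?thesis using cardD s3' by (simp add: s_def)
  qed
  finally show ?thesis .
qed

lemma zero_bound:
  fixes \<xi> :: "nat \<Rightarrow> complex" and c t \<beta> :: real
  assumes xi: "ell2 \<xi>" and bo: "balance_opnorm u N M \<le> \<beta>"
    and t: "t \<le> c * linfty \<xi> - \<beta> * linfty \<xi>" and c: "0 \<le> c" and t0: "linfty \<xi> > 0 \<Longrightarrow> t > 0"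
    and q1: "\<forall>k\<in>{1..r}. qlev Nv mv k = 1"
  shows "measure_pmf.prob (bernoulli_scheme r Nv mv) {\<delta>. linfty (err_vec u r Nv mv \<Delta> \<delta> \<xi>) > c * linfty \<xi>} = 0"
proof (cases "linfty \<xi> > 0")
  case False
  have L0: "linfty \<xi> \<le> 0" using False by simp
  have "cmod (\<xi> j) \<le> linfty \<xi>" for j by (rule linfty_ge[OF ell2_bdd[OF xi]])
  then have z: "\<xi> j = 0" for j using L0 by (metis norm_le_zero_iff order.trans)
  have "err_vec u r Nv mv \<Delta> \<delta> \<xi> = (\<lambda>_. 0)" for \<delta> by (rule ext) (simp add: err_vec_def z)
  moreover have "linfty (\<lambda>_. 0) = 0" by (simp add: linfty_def)
  moreover have "linfty \<xi> = 0" using z by (simp add: linfty_def)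
  ultimately show ?thesis by simp
next
  case True
  have qk: "q k = 1" if kN: "k < N" for k
  proof -
    obtain kk where kk: "kk \<in> {1..r}" "k \<in> lev Nv kk" using level_of_N[OF kN] by blast
    show ?thesis using qidx_lev[OF kk] q1 kk(1) by simp
  qed
  have "measure_pmf.prob (bernoulli_scheme r Nv mv) {\<delta>. linfty (err_vec u r Nv mv \<Delta> \<delta> \<xi>) > c * linfty \<xi>}
      \<le> real (card \<Delta>) * 0"
  proof (rule prob_union_le[OF event_sub[OF xi True bo t c]])
    fix i assume i: "i \<in> \<Delta>"
    have "set_pmf (bernoulli_scheme r Nv mv) \<inter> {\<delta>. t \<le> cmod (Zi \<xi> i \<delta>)} = {}"
    proof (rule ccontr)
      assume "\<not> ?thesis"
      then obtain \<delta> where d: "\<delta> \<in> set_pmf (bernoulli_scheme r Nv mv)" "t \<le> cmod (Zi \<xi> i \<delta>)" by blast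
      have "\<delta> \<in> PiE_dflt {..<N} False (set_pmf \<circ> (\<lambda>j. bernoulli_pmf (q j)))"
        using d(1) set_Pi_pmf_subset'[of "{..<N}" False "\<lambda>j. bernoulli_pmf (q j)"] unfolding scheme_eq by auto
      then have "\<delta> k" if kN: "k < N" for k
      proof -
        have m: "\<delta> k \<in> set_pmf (bernoulli_pmf 1)"
          using \<open>\<delta> \<in> PiE_dflt {..<N} False (set_pmf \<circ> (\<lambda>j. bernoulli_pmf (q j)))\<close> kN qk[OF kN]
          by (auto simp: PiE_dflt_def)
        show ?thesis
        proof (rule ccontr)
          assume "\<not> \<delta> k"
          then have "False \<in> set_pmf (bernoulli_pmf 1)" using m by simp
          then show False by (simp add: set_pmf_eq)
        qed
      qed
      then have "Zi \<xi> i \<delta> = 0" unfolding Zi_def using qk by (intro sum.neutral) auto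
      then show False using d(2) t0[OF True] by simp
    qed
    then show "measure_pmf.prob (bernoulli_scheme r Nv mv) {\<delta>. t \<le> cmod (Zi \<xi> i \<delta>)} \<le> 0"
      using measure_pmf_zero_iff[of "bernoulli_scheme r Nv mv" "{\<delta>. t \<le> cmod (Zi \<xi> i \<delta>)}"] by simp
  qed
  then show ?thesis by (simp add: measure_nonneg antisym)
qed

end


lemma helper1:
  fixes P lx a m :: real
  assumes "0 \<le> P" "P * lx \<le> 1 / 10000" "m \<le> a * lx" "0 \<le> a" "0 < m"
  shows "P \<le> a / (10000 * m)"
proof -
  have "P * m \<le> P * (a * lx)" using assms by (intro mult_left_mono) auto
  also have "\<dots> = a * (P * lx)" by (simp add: mult_ac)
  also have "\<dots> \<le> a * (1 / 10000)" using assms by (intro mult_left_mono) auto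
  finally have "P * m \<le> a / 10000" by simp
  then show ?thesis using assms(5) by (simp add: field_simps)
qed

context mlsetup begin

lemma zero_L:
  assumes xi: "ell2 \<xi>" and L: "\<not> linfty \<xi> > 0"
  shows "measure_pmf.prob (bernoulli_scheme r Nv mv) {\<delta>. linfty (err_vec u r Nv mv \<Delta> \<delta> \<xi>) > c * linfty \<xi>} = 0"
proof -
  have L0: "linfty \<xi> \<le> 0" using L by simp
  have "cmod (\<xi> j) \<le> linfty \<xi>" for j by (rule linfty_ge[OF ell2_bdd[OF xi]])
  then have z: "\<xi> j = 0" for j using L0 by (metis norm_le_zero_iff order.trans)
  have "err_vec u r Nv mv \<Delta> \<delta> \<xi> = (\<lambda>_. 0)" for \<delta> by (rule ext) (simp add: err_vec_def z)
  moreover have "linfty (\<lambda>_. 0) = 0" by (simp add: linfty_def)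
  moreover have "linfty \<xi> = 0" using z by (simp add: linfty_def)
  ultimately show ?thesis by simp
qed

lemma Lambda_nonneg: "0 \<le> Lambda u r Nv Mv mv sv"
proof -
  have "card \<Delta> \<ge> 3" using cardD s3 by simp
  then obtain i where i: "i \<in> \<Delta>" by fastforce
  have "Nv 1 \<le> N" using lev_mono[OF N0 Ninc, of 1 r] r1 by simp
  then have "0 < N" using N1 by simp
  have "cmod (cnj (u 0 i) * (\<Sum>j\<in>\<Delta>. u 0 j * (\<lambda>_. 0) j)) / q 0 \<le> Lambda u r Nv Mv mv sv * 1"
    by (rule a_bound[OF i \<open>0 < N\<close>]) auto
  then show ?thesis by simp
qed

lemma Upsilon_nonneg: "0 \<le> Upsilon u r Nv Mv mv sv"
proof -
  have "card \<Delta> \<ge> 3" using cardD s3 by simp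
  then obtain i where i: "i \<in> \<Delta>" by fastforce
  have "(\<Sum>k<N. (1 / q k - 1) * (cmod (cnj (u k i) * (\<Sum>j\<in>\<Delta>. u k j * (\<lambda>_. 0) j)))^2) \<le> Upsilon u r Nv Mv mv sv * 1^2"
    by (rule var_bound[OF i]) auto
  then show ?thesis by simp
qed

end


context mlsetup begin

lemma final:
  fixes \<xi> :: "nat \<Rightarrow> complex" and \<gamma> :: real
  assumes wb: "weak_balancing u (Nv r) (Kmax r Nv mv) (Mv r) (\<Sum>k=1..r. sv k)" and xi: "ell2 \<xi>" and g: "\<gamma> > 0"
  shows "(let s = real (\<Sum>k=1..r. sv k); K = Kmax r Nv mv; M = real (Mv r);
          \<Lambda> = Lambda u r Nv Mv mv sv; \<Upsilon> = Upsilon u r Nv Mv mv sv;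
          \<alpha> = inverse (2 * sqrt (log 2 (4 * sqrt s * K * M)));
          P = (\<lambda>a. measure_pmf.prob (bernoulli_scheme r Nv mv)
                 {\<delta>. linfty (err_vec u r Nv mv \<Delta> \<delta> \<xi>) > a * linfty \<xi>})
      in ((10000 * \<Lambda> * (ln (s / \<gamma>) + 1) * ln (sqrt s * K * M) \<le> 1 \<and>
           10000 * \<Upsilon> * (ln (s / \<gamma>) + 1) * ln (sqrt s * K * M) \<le> 1
             \<longrightarrow> P \<alpha> \<le> \<gamma>) \<and>
          (10000 * \<Lambda> * (ln (s / \<gamma>) + 1) \<le> 1 \<and> 10000 * \<Upsilon> * (ln (s / \<gamma>) + 1) \<le> 1
             \<longrightarrow> P (1 / 2) \<le> \<gamma>) \<and>
          ((\<forall>k\<in>{1..r}. qlev Nv mv k = 1) \<longrightarrow> P \<alpha> = 0 \<and> P (1 / 2) = 0)))"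
proof -
  define s where "s = real (\<Sum>k=1..r. sv k)"
  define K where "K = Kmax r Nv mv"
  define Mr where "Mr = real (Mv r)"
  define \<Lambda> where "\<Lambda> = Lambda u r Nv Mv mv sv"
  define \<Upsilon> where "\<Upsilon> = Upsilon u r Nv Mv mv sv"
  define \<alpha> where "\<alpha> = inverse (2 * sqrt (log 2 (4 * sqrt s * K * Mr)))"
  define L where "L = linfty \<xi>"
  define Ev where "Ev = (\<lambda>c. measure_pmf.prob (bernoulli_scheme r Nv mv) {\<delta>. linfty (err_vec u r Nv mv \<Delta> \<delta> \<xi>) > c * L})"
  define H where "H = ln (s / \<gamma>) + 1"
  define lx where "lx = ln (sqrt s * K * Mr)"
  have s3': "s \<ge> 3" using s3 unfolding s_def by linarith
  have K1': "K \<ge> 1" using K1 unfolding K_def .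
  have M3': "Mr \<ge> 3" using M3 unfolding Mr_def .
  have a_eq: "\<alpha> = inverse (2 * sqrt (log 2 (4 * (sqrt s * K * Mr))))" by (simp add: \<alpha>_def mult_ac)
  note nf = num_facts[OF s3' K1' M3', folded a_eq lx_def]
  have lx1: "lx \<ge> 1" and a0: "\<alpha> > 0" and a4: "\<alpha> \<le> 1/4" and a2l: "\<alpha>^2 * lx \<ge> 1/24" and al: "\<alpha> * lx \<ge> 1/6"
    using nf by auto
  have bo: "balance_opnorm u N M \<le> \<alpha> / 4"
    using wb unfolding weak_balancing_def \<alpha>_def s_def K_def Mr_def by (simp add: inverse_mult_distrib)
  have L0: "0 \<le> \<Lambda>" unfolding \<Lambda>_def by (rule Lambda_nonneg)
  have U0: "0 \<le> \<Upsilon>" unfolding \<Upsilon>_def by (rule Upsilon_nonneg)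
  have main: "(10000 * \<Lambda> * H * lx \<le> 1 \<and> 10000 * \<Upsilon> * H * lx \<le> 1 \<longrightarrow> Ev \<alpha> \<le> \<gamma>) \<and>
          (10000 * \<Lambda> * H \<le> 1 \<and> 10000 * \<Upsilon> * H \<le> 1 \<longrightarrow> Ev (1 / 2) \<le> \<gamma>) \<and>
          ((\<forall>k\<in>{1..r}. qlev Nv mv k = 1) \<longrightarrow> Ev \<alpha> = 0 \<and> Ev (1 / 2) = 0)"
  proof (cases "L > 0")
    case False
    have "Ev c = 0" for c unfolding Ev_def L_def by (rule zero_L[OF xi]) (use False L_def in simp)
    then show ?thesis using g by simp
  next
    case Lp: True
    have t1: "3/4 * \<alpha> * L \<le> \<alpha> * L - \<alpha> / 4 * L" by (simp add: algebra_simps)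
    have t2: "(1/2 - \<alpha>/4) * L \<le> 1/2 * L - \<alpha> / 4 * L" by (simp add: algebra_simps)
    have t1p: "3/4 * \<alpha> * L > 0" using a0 Lp by simp
    have t2p: "(1/2 - \<alpha>/4) * L > 0" using a4 Lp by simp
    have part3: "(\<forall>k\<in>{1..r}. qlev Nv mv k = 1) \<longrightarrow> Ev \<alpha> = 0 \<and> Ev (1 / 2) = 0"
    proof
      assume q1: "\<forall>k\<in>{1..r}. qlev Nv mv k = 1"
      show "Ev \<alpha> = 0 \<and> Ev (1 / 2) = 0" unfolding Ev_def L_def
        using zero_bound[OF xi bo t1[unfolded L_def] _ _ q1] zero_bound[OF xi bo t2[unfolded L_def] _ _ q1]
          a0 t1p t2p L_def by auto
    qed
    show ?thesis
    proof (cases "\<gamma> < 1")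
      case False
      have "Ev c \<le> \<gamma>" for c using False unfolding Ev_def by (meson measure_pmf.prob_le_1 not_less order.trans)
      then show ?thesis using part3 by blast
    next
      case gl: True
      define G where "G = ln (4 * s / \<gamma>)"
      have sg: "s / \<gamma> \<ge> 1" using g gl s3' by (simp add: field_simps)
      have lsg: "ln (s / \<gamma>) \<ge> 0" using sg by simp
      have GH: "G \<le> 2 * H"
      proof -
        have e4: "4 * s / \<gamma> = 4 * (s / \<gamma>)" by simp
        have "G = ln 4 + ln (s / \<gamma>)" unfolding G_def e4 using g s3' by (intro ln_mult_pos) auto
        moreover have "ln (4::real) \<le> 2"
        proof -
          have "ln (4::real) = ln 2 + ln 2" using ln_mult[of 2 2] by simp
          moreover have "ln (2::real) \<le> 1" using ln_le_minus_one[of 2] by simp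
          ultimately show ?thesis by simp
        qed
        ultimately show ?thesis unfolding H_def using lsg by simp
      qed
      have G0: "0 \<le> G" using GH unfolding G_def using g s3' gl by (simp add: field_simps)
      have H1: "H \<ge> 1" using lsg unfolding H_def by simp
      have part1: "10000 * \<Lambda> * H * lx \<le> 1 \<and> 10000 * \<Upsilon> * H * lx \<le> 1 \<longrightarrow> Ev \<alpha> \<le> \<gamma>"
      proof
        assume hyp: "10000 * \<Lambda> * H * lx \<le> 1 \<and> 10000 * \<Upsilon> * H * lx \<le> 1"
        have P1: "\<Lambda> * H \<le> \<alpha> / (10000 * (1/6))"
          by (rule helper1) (use L0 H1 hyp al a0 in \<open>auto simp: mult_ac\<close>)
        have P2: "\<Upsilon> * H \<le> \<alpha>^2 / (10000 * (1/24))"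
          by (rule helper1) (use U0 H1 hyp a2l a0 in \<open>auto simp: mult_ac\<close>)
        have bc: "8 * (\<Lambda> * L) * G \<le> 3/4 * \<alpha> * L"
        proof -
          have "8 * (\<Lambda> * L) * G \<le> 8 * (\<Lambda> * L) * (2 * H)" using GH L0 Lp by (intro mult_left_mono) auto
          also have "\<dots> = 16 * (\<Lambda> * H) * L" by (simp add: mult_ac)
          also have "\<dots> \<le> 16 * (\<alpha> / (10000 * (1/6))) * L" using P1 Lp by (intro mult_right_mono mult_left_mono) auto
          also have "\<dots> \<le> 3/4 * \<alpha> * L" using a0 Lp by (simp add: field_simps)
          finally show ?thesis .
        qed
        have vc: "64 * G * (\<Upsilon> * L^2) \<le> (3/4 * \<alpha> * L)^2"
        proof -
          have "64 * G * (\<Upsilon> * L^2) \<le> 64 * (2 * H) * (\<Upsilon> * L^2)" using GH U0 by (intro mult_right_mono mult_left_mono) auto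
          also have "\<dots> = 128 * (\<Upsilon> * H) * L^2" by (simp add: mult_ac)
          also have "\<dots> \<le> 128 * (\<alpha>^2 / (10000 * (1/24))) * L^2" using P2 by (intro mult_right_mono mult_left_mono) auto
          also have "\<dots> \<le> (3/4 * \<alpha> * L)^2" using a0 Lp by (simp add: field_simps power2_eq_square)
          finally show ?thesis .
        qed
        show "Ev \<alpha> \<le> \<gamma>" unfolding Ev_def L_def
          by (rule main_bound[OF xi _ bo t1[unfolded L_def] _ t1p[unfolded L_def] g gl])
             (use a0 Lp bc vc in \<open>simp_all add: L_def G_def s_def \<Lambda>_def \<Upsilon>_def\<close>)
      qed
      have part2: "10000 * \<Lambda> * H \<le> 1 \<and> 10000 * \<Upsilon> * H \<le> 1 \<longrightarrow> Ev (1/2) \<le> \<gamma>"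
      proof
        assume hyp: "10000 * \<Lambda> * H \<le> 1 \<and> 10000 * \<Upsilon> * H \<le> 1"
        have P1: "\<Lambda> * H \<le> 1 / 10000" using hyp by (simp add: mult_ac)
        have P2: "\<Upsilon> * H \<le> 1 / 10000" using hyp by (simp add: mult_ac)
        have tL: "7/16 * L \<le> (1/2 - \<alpha>/4) * L" using a4 Lp by (intro mult_right_mono) auto
        have bc: "8 * (\<Lambda> * L) * G \<le> (1/2 - \<alpha>/4) * L"
        proof -
          have "8 * (\<Lambda> * L) * G \<le> 8 * (\<Lambda> * L) * (2 * H)" using GH L0 Lp by (intro mult_left_mono) auto
          also have "\<dots> = 16 * (\<Lambda> * H) * L" by (simp add: mult_ac)
          also have "\<dots> \<le> 16 * (1 / 10000) * L" using P1 Lp by (intro mult_right_mono mult_left_mono) auto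
          also have "\<dots> \<le> 7/16 * L" using Lp by simp
          finally show ?thesis using tL by linarith
        qed
        have vc: "64 * G * (\<Upsilon> * L^2) \<le> ((1/2 - \<alpha>/4) * L)^2"
        proof -
          have "64 * G * (\<Upsilon> * L^2) \<le> 64 * (2 * H) * (\<Upsilon> * L^2)" using GH U0 by (intro mult_right_mono mult_left_mono) auto
          also have "\<dots> = 128 * (\<Upsilon> * H) * L^2" by (simp add: mult_ac)
          also have "\<dots> \<le> 128 * (1 / 10000) * L^2" using P2 by (intro mult_right_mono mult_left_mono) auto
          also have "\<dots> \<le> (7/16 * L)^2" by (simp add: power2_eq_square)
          also have "\<dots> \<le> ((1/2 - \<alpha>/4) * L)^2" using tL Lp by (intro power_mono) auto
          finally show ?thesis .
        qed
        show "Ev (1/2) \<le> \<gamma>" unfolding Ev_def L_def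
          by (rule main_bound[OF xi _ bo t2[unfolded L_def] _ t2p[unfolded L_def] g gl])
             (use Lp bc vc in \<open>simp_all add: L_def G_def s_def \<Lambda>_def \<Upsilon>_def\<close>)
      qed
      show ?thesis using part1 part2 part3 by blast
    qed
  qed
  then show ?thesis
    unfolding Let_def Ev_def L_def H_def lx_def s_def K_def Mr_def \<Lambda>_def \<Upsilon>_def \<alpha>_def .
qed

end


theorem proposition7p12:
  shows "\<exists>C0::real. C0 > 0 \<and>
   (\<forall>(u::nat \<Rightarrow> nat \<Rightarrow> complex) (r::nat) (Nv::nat \<Rightarrow> nat) (Mv::nat \<Rightarrow> nat) (mv::nat \<Rightarrow> nat)
      (sv::nat \<Rightarrow> nat) (\<Delta>::nat set) (\<xi>::nat \<Rightarrow> complex) (\<gamma>::real).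
     isometry_matrix u \<and> r \<ge> 1 \<and> Nv 0 = 0 \<and> Mv 0 = 0 \<and> 1 \<le> Nv 1 \<and>
     (\<forall>k\<in>{2..r}. Nv (k - 1) < Nv k) \<and> (\<forall>k\<in>{2..r}. Mv (k - 1) < Mv k) \<and>
     (\<forall>k\<in>{1..r}. 1 \<le> mv k \<and> mv k \<le> Nv k - Nv (k - 1)) \<and>
     \<Delta> \<subseteq> {..<Mv r} \<and> (\<forall>k\<in>{1..r}. card (\<Delta> \<inter> lev Mv k) = sv k) \<and>
     (\<Sum>k=1..r. sv k) \<ge> 3 \<and>
     weak_balancing u (Nv r) (Kmax r Nv mv) (Mv r) (\<Sum>k=1..r. sv k) \<and>
     ell2 \<xi> \<and> \<gamma> > 0
   \<longrightarrow>
     (let s = real (\<Sum>k=1..r. sv k); K = Kmax r Nv mv; M = real (Mv r);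
          \<Lambda> = Lambda u r Nv Mv mv sv; \<Upsilon> = Upsilon u r Nv Mv mv sv;
          \<alpha> = inverse (2 * sqrt (log 2 (4 * sqrt s * K * M)));
          P = (\<lambda>a. measure_pmf.prob (bernoulli_scheme r Nv mv)
                 {\<delta>. linfty (err_vec u r Nv mv \<Delta> \<delta> \<xi>) > a * linfty \<xi>})
      in ((C0 * \<Lambda> * (ln (s / \<gamma>) + 1) * ln (sqrt s * K * M) \<le> 1 \<and>
           C0 * \<Upsilon> * (ln (s / \<gamma>) + 1) * ln (sqrt s * K * M) \<le> 1
             \<longrightarrow> P \<alpha> \<le> \<gamma>) \<and>
          (C0 * \<Lambda> * (ln (s / \<gamma>) + 1) \<le> 1 \<and> C0 * \<Upsilon> * (ln (s / \<gamma>) + 1) \<le> 1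
             \<longrightarrow> P (1 / 2) \<le> \<gamma>) \<and>
          ((\<forall>k\<in>{1..r}. qlev Nv mv k = 1) \<longrightarrow> P \<alpha> = 0 \<and> P (1 / 2) = 0))))"
proof (intro exI[of _ "10000::real"] conjI allI impI)
  show "(10000::real) > 0" by simp
next
  fix u :: "nat \<Rightarrow> nat \<Rightarrow> complex" and r :: nat and Nv Mv mv sv :: "nat \<Rightarrow> nat"
    and \<Delta> :: "nat set" and \<xi> :: "nat \<Rightarrow> complex" and \<gamma> :: real
  assume A: "isometry_matrix u \<and> r \<ge> 1 \<and> Nv 0 = 0 \<and> Mv 0 = 0 \<and> 1 \<le> Nv 1 \<and>
     (\<forall>k\<in>{2..r}. Nv (k - 1) < Nv k) \<and> (\<forall>k\<in>{2..r}. Mv (k - 1) < Mv k) \<and>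
     (\<forall>k\<in>{1..r}. 1 \<le> mv k \<and> mv k \<le> Nv k - Nv (k - 1)) \<and>
     \<Delta> \<subseteq> {..<Mv r} \<and> (\<forall>k\<in>{1..r}. card (\<Delta> \<inter> lev Mv k) = sv k) \<and>
     (\<Sum>k=1..r. sv k) \<ge> 3 \<and>
     weak_balancing u (Nv r) (Kmax r Nv mv) (Mv r) (\<Sum>k=1..r. sv k) \<and>
     ell2 \<xi> \<and> \<gamma> > 0"
  interpret mlsetup u r Nv Mv mv sv \<Delta>
    by unfold_locales (use A in auto)
  show "let s = real (\<Sum>k=1..r. sv k); K = Kmax r Nv mv; M = real (Mv r);
          \<Lambda> = Lambda u r Nv Mv mv sv; \<Upsilon> = Upsilon u r Nv Mv mv sv;
          \<alpha> = inverse (2 * sqrt (log 2 (4 * sqrt s * K * M)));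
          P = (\<lambda>a. measure_pmf.prob (bernoulli_scheme r Nv mv)
                 {\<delta>. linfty (err_vec u r Nv mv \<Delta> \<delta> \<xi>) > a * linfty \<xi>})
      in ((10000 * \<Lambda> * (ln (s / \<gamma>) + 1) * ln (sqrt s * K * M) \<le> 1 \<and>
           10000 * \<Upsilon> * (ln (s / \<gamma>) + 1) * ln (sqrt s * K * M) \<le> 1
             \<longrightarrow> P \<alpha> \<le> \<gamma>) \<and>
          (10000 * \<Lambda> * (ln (s / \<gamma>) + 1) \<le> 1 \<and> 10000 * \<Upsilon> * (ln (s / \<gamma>) + 1) \<le> 1
             \<longrightarrow> P (1 / 2) \<le> \<gamma>) \<and>
          ((\<forall>k\<in>{1..r}. qlev Nv mv k = 1) \<longrightarrow> P \<alpha> = 0 \<and> P (1 / 2) = 0))"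
    by (rule final) (use A in auto)
qed

end
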